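(* Let $\mathcal{P},\mathcal{Q}\in\mathbb{R}[\xi]^{\ell\times n}$ be two real matrix polynomials of the same size. Then there exist unimodular matrix polynomials $\mathcal{U}\in\mathbb{R}[\xi]^{\ell\times\ell}$ and $\mathcal{V}\in\mathbb{R}[\xi]^{n\times n}$, nonnegative integers $r_P,m,q,r_1,\dots,r_q,s_1,\dots,s_q$ with $r_P+m+r_1+\dots+r_q=n$ and $r_P+r_1+\dots+r_q+s_1+\dots+s_q=\ell$, such that the following holds. Partition the columns of $\mathcal{U}\mathcal{P}\mathcal{V}$ and $\mathcal{U}\mathcal{Q}\mathcal{V}$ into consecutive groups $C_P, C_0, C_1,\dots,C_q$ of sizes $r_P,m,r_1,\dots,r_q$, and partition their rows into consecutive groups $R_P,R_1,\dots,R_q,S_1,\dots,S_q$ of sizes $r_P,r_1,\dots,r_q,s_1,\dots,s_q$. Denote by $X[R,C]$ the block of a matrix $X$ in row group $R$ and column group $C$. Then: (a) $(\mathcal{U}\mathcal{P}\mathcal{V})[R_P,C_P]=\Sigma_P$, $(\mathcal{U}\mathcal{P}\mathcal{V})[R_P,C_0]=0$; for every $a$, the blocks of $\mathcal{U}\mathcal{P}\mathcal{V}$ in rows $R_a$ and in rows $S_a$ vanish in the columns $C_P$, $C_0$ and $C_b$ for all $b\le a$ (the blocks in columns $C_b$, $b>a$, and all blocks of row group $R_P$ in columns $C_1,\dots,C_q$ are arbitrary); (b) $(\mathcal{U}\mathcal{Q}\mathcal{V})[R_P,C_P]=\mathcal{Q}_{11}$, $(\mathcal{U}\mathcal{Q}\mathcal{V})[R_P,C_0]=\mathcal{Q}_{12}$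 (arbitrary); for every $a$, the blocks of $\mathcal{U}\mathcal{Q}\mathcal{V}$ in rows $R_a$ vanish in the columns $C_P,C_0$ and $C_b$ for $b<a$, and $(\mathcal{U}\mathcal{Q}\mathcal{V})[R_a,C_a]=\Sigma_a$; the blocks in rows $S_a$ vanish in the columns $C_P,C_0$ and $C_b$ for all $b\le a$ (all remaining blocks are arbitrary). Here $\Sigma_P$ is an $r_P\times r_P$ diagonal matrix polynomial and each $\Sigma_a$ is an $r_a\times r_a$ diagonal matrix polynomial $\mathrm{diag}(p_{a,1},\dots,p_{a,r_a})$, all diagonal entries being monic polynomials.
   Context: A square matrix polynomial $\mathcal{M}\in\mathbb{R}[\xi]^{k\times k}$ is called unimodular if $\det \mathcal{M}$ is a nonzero constant. A scalar polynomial is monic if its leading coefficient is $1$. Block groups of size zero are allowed. *)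

theory Defs
  imports "HOL-Computational_Algebra.Polynomial" "Jordan_Normal_Form.Determinant"
begin

definition unimodular :: "real poly mat \<Rightarrow> bool" where
  "unimodular M \<longleftrightarrow> dim_row M = dim_col M \<and> det M \<noteq> 0 \<and> degree (det M) = 0"

definition monic :: "real poly \<Rightarrow> bool" where
  "monic p \<longleftrightarrow> lead_coeff p = 1"

definition block_zero :: "real poly mat \<Rightarrow> nat set \<Rightarrow> nat set \<Rightarrow> bool" where
  "block_zero X I J \<longleftrightarrow> (\<forall>i\<in>I. \<forall>j\<in>J. X $$ (i, j) = 0)"

definition diag_monic_block :: "real poly mat \<Rightarrow> nat \<Rightarrow> nat \<Rightarrow> nat \<Rightarrow> bool" where
  "diag_monic_block X ro co k \<longleftrightarrow>
     (\<forall>x<k. \<forall>y<k. (x \<noteq> y \<longrightarrow> X $$ (ro + x, co + y) = 0) \<and>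
                  (x = y \<longrightarrow> monic (X $$ (ro + x, co + x))))"

text \<open>Block groups, indexed from 0 (group a here is group a+1 of the paper).
  Column groups: C_P, C_0, C_0', ..., C_(q-1)'; row groups: R_P, R_0,...,R_(q-1), S_0,...,S_(q-1).\<close>
definition colP :: "nat \<Rightarrow> nat set" where "colP rP = {0..<rP}"
definition col0 :: "nat \<Rightarrow> nat \<Rightarrow> nat set" where "col0 rP m = {rP..<rP+m}"
definition colC :: "nat \<Rightarrow> nat \<Rightarrow> (nat \<Rightarrow> nat) \<Rightarrow> nat \<Rightarrow> nat set" where
  "colC rP m r a = {rP + m + (\<Sum>i<a. r i) ..< rP + m + (\<Sum>i<Suc a. r i)}"
definition rowP :: "nat \<Rightarrow> nat set" where "rowP rP = {0..<rP}"
definition rowR :: "nat \<Rightarrow> (nat \<Rightarrow> nat) \<Rightarrow> nat \<Rightarrow> nat set" where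
  "rowR rP r a = {rP + (\<Sum>i<a. r i) ..< rP + (\<Sum>i<Suc a. r i)}"
definition rowS :: "nat \<Rightarrow> (nat \<Rightarrow> nat) \<Rightarrow> nat \<Rightarrow> (nat \<Rightarrow> nat) \<Rightarrow> nat \<Rightarrow> nat set" where
  "rowS rP r q s a = {rP + (\<Sum>i<q. r i) + (\<Sum>i<a. s i) ..< rP + (\<Sum>i<q. r i) + (\<Sum>i<Suc a. s i)}"

end

theory Submission
  imports Defs
begin


definition inv_ex :: "real poly mat \<Rightarrow> nat \<Rightarrow> bool" where
  "inv_ex U a \<longleftrightarrow> U \<in> carrier_mat a a \<and> (\<exists>W \<in> carrier_mat a a. U * W = 1\<^sub>m a \<and> W * U = 1\<^sub>m a)"

lemma inv_ex_carrier: "inv_ex U a \<Longrightarrow> U \<in> carrier_mat a a"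
  by (simp add: inv_ex_def)

lemma inv_ex_unimodular: assumes "inv_ex U a" shows "unimodular U"
proof -
  obtain W where U: "U \<in> carrier_mat a a" and W: "W \<in> carrier_mat a a" and UW: "U * W = 1\<^sub>m a"
    using assms by (auto simp: inv_ex_def)
  have d: "det U * det W = 1" using det_mult[OF U W] UW by simp
  hence nz: "det U \<noteq> 0" "det W \<noteq> 0" by auto
  have "degree (det U * det W) = 0" using d by simp
  hence "degree (det U) = 0" using degree_mult_eq[OF nz] by simp
  thus ?thesis using U nz unfolding unimodular_def by auto
qed

lemma inv_ex_one: "inv_ex (1\<^sub>m a) a"
  unfolding inv_ex_def by (intro conjI bexI[of _ "1\<^sub>m a"]) auto

lemma assoc4: assumes "(A :: real poly mat) \<in> carrier_mat a a" "B \<in> carrier_mat a a" "C \<in> carrier_mat a a" "D \<in> carrier_mat a a"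
  shows "A * B * (C * D) = A * (B * C) * D"
proof -
  have "A * B * (C * D) = A * (B * (C * D))" by (rule assoc_mult_mat[of _ a a _ a _ a]) (use assms in auto)
  also have "B * (C * D) = B * C * D" by (rule assoc_mult_mat[of _ a a _ a _ a, symmetric]) (use assms in auto)
  also have "A * (B * C * D) = A * (B * C) * D" by (rule assoc_mult_mat[of _ a a _ a _ a, symmetric]) (use assms in auto)
  finally show ?thesis .
qed

lemma inv_ex_mult: assumes "inv_ex U a" "inv_ex V a" shows "inv_ex (U * V) a"
proof -
  obtain W where U: "U \<in> carrier_mat a a" and W: "W \<in> carrier_mat a a" and "U * W = 1\<^sub>m a" "W * U = 1\<^sub>m a"
    using assms by (auto simp: inv_ex_def)
  moreover obtain X where V: "V \<in> carrier_mat a a" and X: "X \<in> carrier_mat a a" and "V * X = 1\<^sub>m a" "X * V = 1\<^sub>m a"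
    using assms by (auto simp: inv_ex_def)
  ultimately have "U * V * (X * W) = 1\<^sub>m a" "X * W * (U * V) = 1\<^sub>m a"
  proof -
    have "U * V * (X * W) = U * (V * X) * W" by (rule assoc4[OF U V X W])
    thus "U * V * (X * W) = 1\<^sub>m a" using \<open>V * X = 1\<^sub>m a\<close> \<open>U * W = 1\<^sub>m a\<close> U by simp
    have "X * W * (U * V) = X * (W * U) * V" by (rule assoc4[OF X W U V])
    thus "X * W * (U * V) = 1\<^sub>m a" using \<open>X * V = 1\<^sub>m a\<close> \<open>W * U = 1\<^sub>m a\<close> X by simp
  qed
  thus ?thesis unfolding inv_ex_def using U V W X by (intro conjI bexI[of _ "X * W"]) auto
qed

lemma inv_ex_transpose: assumes "inv_ex U a" shows "inv_ex (transpose_mat U) a"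
proof -
  obtain W where U: "U \<in> carrier_mat a a" and W: "W \<in> carrier_mat a a" and "U * W = 1\<^sub>m a" "W * U = 1\<^sub>m a"
    using assms by (auto simp: inv_ex_def)
  hence "transpose_mat U * transpose_mat W = 1\<^sub>m a" "transpose_mat W * transpose_mat U = 1\<^sub>m a"
    by (metis transpose_mult transpose_one)+
  thus ?thesis unfolding inv_ex_def using U W by (intro conjI bexI[of _ "transpose_mat W"]) auto
qed

lemma inv_ex_block: assumes "inv_ex U a" "inv_ex V b"
  shows "inv_ex (four_block_mat U (0\<^sub>m a b) (0\<^sub>m b a) V) (a + b)"
proof -
  obtain W where U: "U \<in> carrier_mat a a" and W: "W \<in> carrier_mat a a" and 1: "U * W = 1\<^sub>m a" "W * U = 1\<^sub>m a"
    using assms by (auto simp: inv_ex_def)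
  obtain X where V: "V \<in> carrier_mat b b" and X: "X \<in> carrier_mat b b" and 2: "V * X = 1\<^sub>m b" "X * V = 1\<^sub>m b"
    using assms by (auto simp: inv_ex_def)
  have "four_block_mat U (0\<^sub>m a b) (0\<^sub>m b a) V * four_block_mat W (0\<^sub>m a b) (0\<^sub>m b a) X = 1\<^sub>m (a+b)"
    by (subst mult_four_block_mat[OF U _ _ V W _ _ X]) (use 1 2 U V W X in auto)
  moreover have "four_block_mat W (0\<^sub>m a b) (0\<^sub>m b a) X * four_block_mat U (0\<^sub>m a b) (0\<^sub>m b a) V = 1\<^sub>m (a+b)"
    by (subst mult_four_block_mat[OF W _ _ X U _ _ V]) (use 1 2 U V W X in auto)
  ultimately show ?thesis unfolding inv_ex_def using U V W X
    by (intro conjI bexI[of _ "four_block_mat W (0\<^sub>m a b) (0\<^sub>m b a) X"]) auto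
qed



definition tr :: "nat \<Rightarrow> nat \<Rightarrow> nat \<Rightarrow> real poly \<Rightarrow> real poly \<Rightarrow> real poly \<Rightarrow> real poly \<Rightarrow> real poly mat" where
  "tr n i j \<alpha> \<beta> \<gamma> \<delta> = mat n n (\<lambda>(r,c). if r = i then (if c = i then \<alpha> else if c = j then \<beta> else 0)
     else if r = j then (if c = i then \<gamma> else if c = j then \<delta> else 0) else (if r = c then 1 else 0))"

lemma tr_carrier[simp]: "tr n i j \<alpha> \<beta> \<gamma> \<delta> \<in> carrier_mat n n"
  by (simp add: tr_def)
lemma tr_dim[simp]: "dim_row (tr n i j \<alpha> \<beta> \<gamma> \<delta>) = n" "dim_col (tr n i j \<alpha> \<beta> \<gamma> \<delta>) = n"
  by (simp_all add: tr_def)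

lemma mult_entry: "M \<in> carrier_mat n n \<Longrightarrow> A \<in> carrier_mat n m \<Longrightarrow> r < n \<Longrightarrow> c < m \<Longrightarrow>
   (M * A) $$ (r,c) = (\<Sum>k\<in>{0..<n}. M $$ (r,k) * A $$ (k,c))"
  by (simp add: scalar_prod_def)

lemma tr_mult:
  assumes ij: "i < n" "j < n" "i \<noteq> j" and A: "A \<in> carrier_mat n m" and rc: "r < n" "c < m"
  shows "(tr n i j \<alpha> \<beta> \<gamma> \<delta> * A) $$ (r,c) = (if r = i then \<alpha> * A$$(i,c) + \<beta> * A$$(j,c)
     else if r = j then \<gamma> * A$$(i,c) + \<delta> * A$$(j,c) else A$$(r,c))"
proof -
  let ?T = "tr n i j \<alpha> \<beta> \<gamma> \<delta>"
  have e: "(?T * A) $$ (r,c) = (\<Sum>k\<in>{0..<n}. ?T $$ (r,k) * A $$ (k,c))"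
    by (rule mult_entry[OF tr_carrier A rc])
  show ?thesis
  proof (cases "r = i \<or> r = j")
    case True
    define x where "x = (if r = i then \<alpha> else \<gamma>)"
    define y where "y = (if r = i then \<beta> else \<delta>)"
    have "\<forall>k\<in>{0..<n}. ?T $$ (r,k) * A $$ (k,c) = (if k = i then x * A$$(i,c) else 0) + (if k = j then y * A$$(j,c) else 0)"
      using True ij rc by (auto simp: tr_def x_def y_def)
    hence "(?T * A) $$ (r,c) = (\<Sum>k\<in>{0..<n}. (if k = i then x * A$$(i,c) else 0) + (if k = j then y * A$$(j,c) else 0))"
      using e by simp
    also have "\<dots> = x * A$$(i,c) + y * A$$(j,c)" using ij by (simp add: sum.distrib)
    finally show ?thesis using True ij by (auto simp: x_def y_def)
  next
    case False
    have "\<forall>k\<in>{0..<n}. ?T $$ (r,k) * A $$ (k,c) = (if k = r then A$$(r,c) else 0)"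
      using False ij rc by (auto simp: tr_def)
    hence "(?T * A) $$ (r,c) = (\<Sum>k\<in>{0..<n}. (if k = r then A$$(r,c) else 0))"
      using e by simp
    also have "\<dots> = A$$(r,c)" using rc by simp
    finally show ?thesis using False by auto
  qed
qed

lemma tr_inv:
  assumes ij: "i < n" "j < n" "i \<noteq> j" and d: "\<alpha> * \<delta> - \<beta> * \<gamma> = 1"
  shows "inv_ex (tr n i j \<alpha> \<beta> \<gamma> \<delta>) n"
proof -
  let ?T = "tr n i j \<alpha> \<beta> \<gamma> \<delta>" and ?S = "tr n i j \<delta> (-\<beta>) (-\<gamma>) \<alpha>"
  have "?T * ?S = 1\<^sub>m n"
  proof (rule eq_matI)
    fix r c assume rc: "r < dim_row (1\<^sub>m n)" "c < dim_col (1\<^sub>m n)"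
    show "(?T * ?S) $$ (r,c) = 1\<^sub>m n $$ (r,c)"
      apply (subst tr_mult[OF ij tr_carrier]) using rc ij d by (auto simp: tr_def algebra_simps)
  qed auto
  moreover have "?S * ?T = 1\<^sub>m n"
  proof (rule eq_matI)
    fix r c assume rc: "r < dim_row (1\<^sub>m n)" "c < dim_col (1\<^sub>m n)"
    show "(?S * ?T) $$ (r,c) = 1\<^sub>m n $$ (r,c)"
      apply (subst tr_mult[OF ij tr_carrier]) using rc ij d by (auto simp: tr_def algebra_simps)
  qed auto
  ultimately show ?thesis unfolding inv_ex_def by (intro conjI bexI[of _ ?S]) auto
qed

definition dm :: "nat \<Rightarrow> (nat \<Rightarrow> real poly) \<Rightarrow> real poly mat" where
  "dm n d = mat n n (\<lambda>(r,c). if r = c then d r else 0)"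

lemma dm_carrier[simp]: "dm n d \<in> carrier_mat n n" by (simp add: dm_def)
lemma dm_dim[simp]: "dim_row (dm n d) = n" "dim_col (dm n d) = n" by (simp_all add: dm_def)

lemma dm_mult: assumes A: "A \<in> carrier_mat n m" and rc: "r < n" "c < m"
  shows "(dm n d * A) $$ (r,c) = d r * A $$ (r,c)"
proof -
  have "(dm n d * A) $$ (r,c) = (\<Sum>k\<in>{0..<n}. dm n d $$ (r,k) * A $$ (k,c))"
    by (rule mult_entry[OF dm_carrier A rc])
  also have "\<dots> = (\<Sum>k\<in>{0..<n}. if k = r then d r * A $$ (r,c) else 0)"
    by (rule sum.cong) (use rc in \<open>auto simp: dm_def\<close>)
  finally show ?thesis using rc by simp
qed

lemma dm_inv: assumes "\<And>i. i < n \<Longrightarrow> d i * e i = 1" shows "inv_ex (dm n d) n"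
proof -
  have "dm n d * dm n e = 1\<^sub>m n"
  proof (rule eq_matI)
    fix r c assume rc: "r < dim_row (1\<^sub>m n)" "c < dim_col (1\<^sub>m n)"
    show "(dm n d * dm n e) $$ (r,c) = 1\<^sub>m n $$ (r,c)"
      apply (subst dm_mult[OF dm_carrier]) using rc by (auto simp: dm_def assms)
  qed auto
  moreover have "dm n e * dm n d = 1\<^sub>m n"
  proof (rule eq_matI)
    fix r c assume rc: "r < dim_row (1\<^sub>m n)" "c < dim_col (1\<^sub>m n)"
    show "(dm n e * dm n d) $$ (r,c) = 1\<^sub>m n $$ (r,c)"
      apply (subst dm_mult[OF dm_carrier]) using rc by (auto simp: dm_def assms mult.commute)
  qed auto
  ultimately show ?thesis unfolding inv_ex_def by (intro conjI bexI[of _ "dm n e"]) auto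
qed

definition pm :: "nat \<Rightarrow> (nat \<Rightarrow> nat) \<Rightarrow> real poly mat" where
  "pm n \<sigma> = mat n n (\<lambda>(r,c). if \<sigma> r = c then 1 else 0)"

lemma pm_carrier[simp]: "pm n \<sigma> \<in> carrier_mat n n" by (simp add: pm_def)
lemma pm_dim[simp]: "dim_row (pm n \<sigma>) = n" "dim_col (pm n \<sigma>) = n" by (simp_all add: pm_def)

lemma pm_mult: assumes A: "A \<in> carrier_mat n m" and rc: "r < n" "c < m" and s: "\<sigma> r < n"
  shows "(pm n \<sigma> * A) $$ (r,c) = A $$ (\<sigma> r, c)"
proof -
  have "(pm n \<sigma> * A) $$ (r,c) = (\<Sum>k\<in>{0..<n}. pm n \<sigma> $$ (r,k) * A $$ (k,c))"
    by (rule mult_entry[OF pm_carrier A rc])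
  also have "\<dots> = (\<Sum>k\<in>{0..<n}. if k = \<sigma> r then A $$ (\<sigma> r,c) else 0)"
    by (rule sum.cong) (use rc in \<open>auto simp: pm_def\<close>)
  finally show ?thesis using s by simp
qed

lemma pm_inv: assumes "\<And>i. i < n \<Longrightarrow> \<sigma> i < n" "\<And>i. i < n \<Longrightarrow> \<tau> i < n"
  "\<And>i. i < n \<Longrightarrow> \<sigma> (\<tau> i) = i" "\<And>i. i < n \<Longrightarrow> \<tau> (\<sigma> i) = i"
  shows "inv_ex (pm n \<sigma>) n"
proof -
  have "pm n \<sigma> * pm n \<tau> = 1\<^sub>m n"
  proof (rule eq_matI)
    fix r c assume rc: "r < dim_row (1\<^sub>m n)" "c < dim_col (1\<^sub>m n)"
    show "(pm n \<sigma> * pm n \<tau>) $$ (r,c) = 1\<^sub>m n $$ (r,c)"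
      apply (subst pm_mult[OF pm_carrier]) using rc by (auto simp: pm_def assms)
  qed auto
  moreover have "pm n \<tau> * pm n \<sigma> = 1\<^sub>m n"
  proof (rule eq_matI)
    fix r c assume rc: "r < dim_row (1\<^sub>m n)" "c < dim_col (1\<^sub>m n)"
    show "(pm n \<tau> * pm n \<sigma>) $$ (r,c) = 1\<^sub>m n $$ (r,c)"
      apply (subst pm_mult[OF pm_carrier]) using rc by (auto simp: pm_def assms)
  qed auto
  ultimately show ?thesis unfolding inv_ex_def by (intro conjI bexI[of _ "pm n \<tau>"]) auto
qed

lemma mult_transpose_as: assumes A: "(A :: real poly mat) \<in> carrier_mat m n" and M: "M \<in> carrier_mat n n"
  shows "A * transpose_mat M = transpose_mat (M * transpose_mat A)"
  using transpose_mult[of M n n "transpose_mat A" m] A M by simp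

lemma mult_transpose_entry: assumes A: "(A :: real poly mat) \<in> carrier_mat m n" and M: "M \<in> carrier_mat n n"
  and rc: "r < m" "c < n"
  shows "(A * transpose_mat M) $$ (r,c) = (M * transpose_mat A) $$ (c,r)"
  unfolding mult_transpose_as[OF A M] using rc A M by simp



lemma bez: fixes x y :: "real poly"
  shows "\<exists>u v g x' y'. u*x + v*y = g \<and> x = g*x' \<and> y = g*y' \<and> (x \<noteq> 0 \<longrightarrow> g \<noteq> 0)"
proof (induction y arbitrary: x rule: measure_induct_rule[of "\<lambda>y::real poly. if y = 0 then 0 else Suc (degree y)"])
  case (less y x)
  show ?case
  proof (cases "y = 0")
    case True
    thus ?thesis by (intro exI[of _ 1] exI[of _ 0] exI[of _ x]) auto
  next
    case False
    have "(if x mod y = 0 then 0 else Suc (degree (x mod y))) < (if y = 0 then 0 else Suc (degree y))"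
      using False degree_mod_less[of y x] by auto
    from less[OF this, of y] obtain u' v' g a' b' where
      h: "u' * y + v' * (x mod y) = g" "y = g * a'" "x mod y = g * b'" "y \<noteq> 0 \<longrightarrow> g \<noteq> 0" by blast
    have xe: "x = (x div y) * y + x mod y" by simp
    have "v' * x + (u' - v' * (x div y)) * y = v' * ((x div y) * y + x mod y) + (u' - v' * (x div y)) * y"
      by (simp only: div_mult_mod_eq)
    also have "\<dots> = u' * y + v' * (x mod y)"
    proof -
      have "\<And>q m. v' * (q * y + m) + (u' - v' * q) * y = u' * y + v' * (m::real poly)"
        by (simp add: algebra_simps)
      thus ?thesis by blast
    qed
    finally have "v' * x + (u' - v' * (x div y)) * y = g" using h(1) by simp
    moreover have "x = (x div y) * (g * a') + g * b'" by (metis h(2) h(3) div_mult_mod_eq)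
    hence "x = g * ((x div y) * a' + b')" by (simp add: algebra_simps)
    ultimately show ?thesis using h False by blast
  qed
qed

lemma same_degree_dvd: fixes g g' :: "real poly"
  assumes "g' dvd g" "g \<noteq> 0" "degree g' = degree g" shows "g dvd g'"
proof -
  obtain h where h: "g = g' * h" using assms(1) by (auto elim: dvdE)
  have nz: "g' \<noteq> 0" "h \<noteq> 0" using h assms(2) by auto
  have "degree h = 0" using degree_mult_eq[OF nz] h assms(3) by simp
  then obtain c where c: "h = [:c:]" by (metis degree_eq_zeroE)
  have "c \<noteq> 0" using nz c by auto
  have "g' = smult (1/c) g" using h c \<open>c \<noteq> 0\<close> by (simp add: smult_smult[symmetric])
  thus ?thesis by (simp add: dvd_smult)
qed

lemma colred_gen:
  assumes A: "A \<in> carrier_mat a b" and b: "0 < b" and nz: "A $$ (0,0) \<noteq> 0"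
  shows "Suc k \<le> a \<Longrightarrow> \<exists>U. inv_ex U a \<and> (\<forall>i. 0 < i \<and> i < Suc k \<longrightarrow> (U * A) $$ (i,0) = 0)
     \<and> (U * A) $$ (0,0) \<noteq> 0 \<and> (\<forall>i < Suc k. (U * A) $$ (0,0) dvd A $$ (i,0))
     \<and> (\<forall>i c. Suc k \<le> i \<and> i < a \<and> c < b \<longrightarrow> (U * A) $$ (i,c) = A $$ (i,c))
     \<and> ((\<forall>i < Suc k. A $$ (0,0) dvd A $$ (i,0)) \<longrightarrow> (\<forall>c < b. (U * A) $$ (0,c) = A $$ (0,c)))"
proof (induction k)
  case 0
  show ?case using A nz by (intro exI[of _ "1\<^sub>m a"]) (auto simp: inv_ex_one)
next
  case (Suc k)
  then obtain U where U: "inv_ex U a" and h1: "\<forall>i. 0 < i \<and> i < Suc k \<longrightarrow> (U * A) $$ (i,0) = 0"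
     and h2: "(U * A) $$ (0,0) \<noteq> 0" and h3: "\<forall>i < Suc k. (U * A) $$ (0,0) dvd A $$ (i,0)"
     and h4: "\<forall>i c. Suc k \<le> i \<and> i < a \<and> c < b \<longrightarrow> (U * A) $$ (i,c) = A $$ (i,c)"
     and h5: "(\<forall>i < Suc k. A $$ (0,0) dvd A $$ (i,0)) \<longrightarrow> (\<forall>c < b. (U * A) $$ (0,c) = A $$ (0,c))"
    by auto
  have Uc: "U \<in> carrier_mat a a" using U by (rule inv_ex_carrier)
  define B where "B = U * A"
  have Bc: "B \<in> carrier_mat a b" using Uc A by (simp add: B_def)
  define x where "x = B $$ (0,0)"
  define y where "y = B $$ (Suc k, 0)"
  have ya: "y = A $$ (Suc k, 0)" using h4 Suc.prems b by (simp add: y_def B_def)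
  have ij: "0 < a" "Suc k < a" "0 \<noteq> Suc k" using Suc.prems by auto
  show ?case
  proof (cases "x dvd y")
    case True
    then obtain z where z: "y = x * z" by (auto elim: dvdE)
    define T where "T = tr a 0 (Suc k) 1 0 (-z) 1"
    have T: "inv_ex T a" unfolding T_def by (rule tr_inv) (use ij in auto)
    have e: "(T * B) $$ (r,c) = (if r = 0 then B$$(0,c) else if r = Suc k then B$$(Suc k,c) - z * B$$(0,c) else B$$(r,c))"
      if "r < a" "c < b" for r c
      unfolding T_def by (subst tr_mult[OF ij Bc that]) auto
    have TUA: "T * U * A = T * B" unfolding B_def by (rule assoc_mult_mat[of _ a a _ a _ b]) (use Uc A in \<open>auto simp: T_def\<close>)
    show ?thesis
    proof (intro exI[of _ "T * U"] conjI allI impI)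
      show "inv_ex (T * U) a" by (rule inv_ex_mult[OF T U])
      fix i assume i: "0 < i \<and> i < Suc (Suc k)"
      show "(T * U * A) $$ (i, 0) = 0" unfolding TUA using i ij b h1 z
        by (subst e) (auto simp: x_def y_def B_def)
    next
      show "(T * U * A) $$ (0, 0) \<noteq> 0" unfolding TUA using ij b h2 by (subst e) (auto simp: B_def)
    next
      fix i assume i: "i < Suc (Suc k)"
      show "(T * U * A) $$ (0, 0) dvd A $$ (i, 0)" unfolding TUA using ij b h3 i z ya
        apply (subst e) apply auto
        by (metis B_def dvd_triv_left less_Suc_eq x_def)
    next
      fix i c assume "Suc (Suc k) \<le> i \<and> i < a \<and> c < b"
      thus "(T * U * A) $$ (i, c) = A $$ (i, c)" unfolding TUA using h4 by (subst e) (auto simp: B_def)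
    next
      fix c assume "\<forall>i<Suc (Suc k). A $$ (0, 0) dvd A $$ (i, 0)" and c: "c < b"
      hence "\<forall>i<Suc k. A $$ (0, 0) dvd A $$ (i, 0)" by auto
      thus "(T * U * A) $$ (0, c) = A $$ (0, c)" unfolding TUA using h5 c ij by (subst e) (auto simp: B_def)
    qed
  next
    case False
    obtain u v g x' y' where bz: "u*x + v*y = g" "x = g*x'" "y = g*y'" "x \<noteq> 0 \<longrightarrow> g \<noteq> 0"
      using bez by blast
    have xnz: "x \<noteq> 0" using h2 by (simp add: x_def B_def)
    hence gnz: "g \<noteq> 0" using bz by auto
    have "g * (u * x' + v * y') = g * 1" using bz by (simp add: algebra_simps)
    hence det1: "u * x' - v * (-y') = 1" using gnz by simp
    define T where "T = tr a 0 (Suc k) u v (-y') x'"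
    have T: "inv_ex T a" unfolding T_def by (rule tr_inv) (use ij det1 in auto)
    have e: "(T * B) $$ (r,c) = (if r = 0 then u * B$$(0,c) + v * B$$(Suc k,c) else if r = Suc k then (-y') * B$$(0,c) + x' * B$$(Suc k,c) else B$$(r,c))"
      if "r < a" "c < b" for r c
      unfolding T_def by (subst tr_mult[OF ij Bc that]) auto
    have TUA: "T * U * A = T * B" unfolding B_def by (rule assoc_mult_mat[of _ a a _ a _ b]) (use Uc A in \<open>auto simp: T_def\<close>)
    have e00: "(T * B) $$ (0,0) = g" using e[of 0 0] ij b bz by (simp add: x_def y_def)
    show ?thesis
    proof (intro exI[of _ "T * U"] conjI allI impI)
      show "inv_ex (T * U) a" by (rule inv_ex_mult[OF T U])
      fix i assume i: "0 < i \<and> i < Suc (Suc k)"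
      show "(T * U * A) $$ (i, 0) = 0" unfolding TUA using i ij b h1 bz
        by (subst e) (auto simp: x_def y_def B_def algebra_simps)
    next
      show "(T * U * A) $$ (0, 0) \<noteq> 0" unfolding TUA e00 by (rule gnz)
    next
      fix i assume i: "i < Suc (Suc k)"
      show "(T * U * A) $$ (0, 0) dvd A $$ (i, 0)" unfolding TUA e00
      proof (cases "i = Suc k")
        case True thus "g dvd A $$ (i,0)" using ya bz by (metis dvd_triv_left)
      next
        case False
        hence "x dvd A $$ (i,0)" using h3 i by (simp add: x_def B_def)
        thus "g dvd A $$ (i,0)" using bz dvd_trans by auto
      qed
    next
      fix i c assume "Suc (Suc k) \<le> i \<and> i < a \<and> c < b"
      thus "(T * U * A) $$ (i, c) = A $$ (i, c)" unfolding TUA using h4 by (subst e) (auto simp: B_def)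
    next
      fix c assume H: "\<forall>i<Suc (Suc k). A $$ (0, 0) dvd A $$ (i, 0)"
      hence "\<forall>i<Suc k. A $$ (0, 0) dvd A $$ (i, 0)" by auto
      hence "x = A $$ (0,0)" using h5 b by (simp add: x_def B_def)
      hence "x dvd y" using H ya by auto
      with False show "(T * U * A) $$ (0, c) = A $$ (0, c)" by simp
    qed
  qed
qed



lemma colred:
  assumes A: "A \<in> carrier_mat a b" and a: "0 < a" and b: "0 < b" and nz: "A $$ (0,0) \<noteq> 0"
  shows "\<exists>U. inv_ex U a \<and> (\<forall>i. 0 < i \<and> i < a \<longrightarrow> (U * A) $$ (i,0) = 0)
     \<and> (U * A) $$ (0,0) \<noteq> 0 \<and> (\<forall>i < a. (U * A) $$ (0,0) dvd A $$ (i,0))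
     \<and> ((\<forall>i < a. A $$ (0,0) dvd A $$ (i,0)) \<longrightarrow> (\<forall>c < b. (U * A) $$ (0,c) = A $$ (0,c)))"
  using colred_gen[OF A b nz, of "a - 1"] a by auto

definition eqv :: "nat \<Rightarrow> nat \<Rightarrow> real poly mat \<Rightarrow> real poly mat \<Rightarrow> bool" where
  "eqv a b A B \<longleftrightarrow> (\<exists>U V. inv_ex U a \<and> inv_ex V b \<and> B = U * A * V)"

lemma eqv_refl: "A \<in> carrier_mat a b \<Longrightarrow> eqv a b A A"
  unfolding eqv_def by (intro exI[of _ "1\<^sub>m a"] exI[of _ "1\<^sub>m b"]) (auto simp: inv_ex_one)

lemma eqv_carrier: "eqv a b A B \<Longrightarrow> A \<in> carrier_mat a b \<Longrightarrow> B \<in> carrier_mat a b"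
  unfolding eqv_def by (metis inv_ex_carrier mult_carrier_mat)

lemma eqv_trans: assumes A: "A \<in> carrier_mat a b" and "eqv a b A B" "eqv a b B C" shows "eqv a b A C"
proof -
  obtain U V where U: "inv_ex U a" and V: "inv_ex V b" and B: "B = U * A * V" using assms by (auto simp: eqv_def)
  obtain U' V' where U': "inv_ex U' a" and V': "inv_ex V' b" and C: "C = U' * B * V'" using assms by (auto simp: eqv_def)
  have c: "U \<in> carrier_mat a a" "V \<in> carrier_mat b b" "U' \<in> carrier_mat a a" "V' \<in> carrier_mat b b"
    using U V U' V' inv_ex_carrier by auto
  have "U' * (U * A * V) * V' = U' * (U * A * V * V')"
    by (rule assoc_mult_mat[of _ a a _ b _ b]) (use c A in auto)
  also have "U * A * V * V' = U * A * (V * V')"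
    by (rule assoc_mult_mat[of _ a b _ b _ b]) (use c A in auto)
  also have "U' * (U * A * (V * V')) = U' * (U * A) * (V * V')"
    by (rule assoc_mult_mat[of _ a a _ b _ b, symmetric]) (use c A in auto)
  also have "U' * (U * A) = U' * U * A"
    by (rule assoc_mult_mat[of _ a a _ a _ b, symmetric]) (use c A in auto)
  finally have "C = U' * U * A * (V * V')" using B C by simp
  thus ?thesis unfolding eqv_def using inv_ex_mult[OF U' U] inv_ex_mult[OF V V'] by blast
qed

lemma eqv_left: "inv_ex U a \<Longrightarrow> A \<in> carrier_mat a b \<Longrightarrow> eqv a b A (U * A)"
  unfolding eqv_def by (intro exI[of _ U] exI[of _ "1\<^sub>m b"]) (auto simp: inv_ex_one inv_ex_carrier)

lemma eqv_right: "inv_ex V b \<Longrightarrow> A \<in> carrier_mat a b \<Longrightarrow> eqv a b A (A * V)"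
  unfolding eqv_def by (intro exI[of _ "1\<^sub>m a"] exI[of _ V]) (auto simp: inv_ex_one inv_ex_carrier)

lemma eqv_transpose: assumes A: "A \<in> carrier_mat a b" and e: "eqv b a (transpose_mat A) B"
  shows "eqv a b A (transpose_mat B)"
proof -
  obtain U V where U: "inv_ex U b" and V: "inv_ex V a" and B: "B = U * transpose_mat A * V"
    using e by (auto simp: eqv_def)
  have c: "U \<in> carrier_mat b b" "V \<in> carrier_mat a a" using U V inv_ex_carrier by auto
  have "transpose_mat B = transpose_mat V * transpose_mat (U * transpose_mat A)"
    unfolding B by (rule transpose_mult[of _ b a _ a]) (use c A in auto)
  also have "transpose_mat (U * transpose_mat A) = A * transpose_mat U"
    using transpose_mult[of U b b "transpose_mat A" a] c A by simp
  also have "transpose_mat V * (A * transpose_mat U) = transpose_mat V * A * transpose_mat U"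
    by (rule assoc_mult_mat[of _ a a _ b _ b, symmetric]) (use c A in auto)
  finally show ?thesis unfolding eqv_def using inv_ex_transpose[OF U] inv_ex_transpose[OF V] by blast
qed

lemma pivot0:
  assumes "A \<in> carrier_mat a b" "0 < a" "0 < b" "A $$ (0,0) \<noteq> 0"
  shows "\<exists>B. eqv a b A B \<and> B \<in> carrier_mat a b \<and> B $$ (0,0) \<noteq> 0 \<and>
    (\<forall>i. 0 < i \<and> i < a \<longrightarrow> B $$ (i,0) = 0) \<and> (\<forall>j. 0 < j \<and> j < b \<longrightarrow> B $$ (0,j) = 0)"
  using assms
proof (induction "degree (A $$ (0,0))" arbitrary: A rule: less_induct)
  case less
  note A = less.prems(1) and a = less.prems(2) and b = less.prems(3) and nz = less.prems(4)
  obtain U where U: "inv_ex U a" and u1: "\<forall>i. 0 < i \<and> i < a \<longrightarrow> (U * A) $$ (i,0) = 0"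
     and u2: "(U * A) $$ (0,0) \<noteq> 0" and u3: "\<forall>i < a. (U * A) $$ (0,0) dvd A $$ (i,0)"
    using colred[OF A a b nz] by blast
  define B where "B = U * A"
  have Bc: "B \<in> carrier_mat a b" using inv_ex_carrier[OF U] A unfolding B_def by auto
  have eAB: "eqv a b A B" unfolding B_def by (rule eqv_left[OF U A])
  define g where "g = B $$ (0,0)"
  have gnz: "g \<noteq> 0" using u2 by (simp add: g_def B_def)
  have gdeg: "degree g \<le> degree (A $$ (0,0))"
    using u3 a nz by (auto simp: g_def B_def intro!: dvd_imp_degree_le)
  have Bt: "transpose_mat B \<in> carrier_mat b a" using Bc by simp
  have Btnz: "transpose_mat B $$ (0,0) \<noteq> 0" using gnz Bc a b by (simp add: g_def)
  obtain V' where V': "inv_ex V' b" and v1: "\<forall>i. 0 < i \<and> i < b \<longrightarrow> (V' * transpose_mat B) $$ (i,0) = 0"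
     and v2: "(V' * transpose_mat B) $$ (0,0) \<noteq> 0"
     and v3: "\<forall>i < b. (V' * transpose_mat B) $$ (0,0) dvd transpose_mat B $$ (i,0)"
     and v4: "(\<forall>i < b. transpose_mat B $$ (0,0) dvd transpose_mat B $$ (i,0)) \<longrightarrow> (\<forall>c < a. (V' * transpose_mat B) $$ (0,c) = transpose_mat B $$ (0,c))"
    using colred[OF Bt b a Btnz] by blast
  define C where "C = transpose_mat (V' * transpose_mat B)"
  have V'c: "V' \<in> carrier_mat b b" using V' inv_ex_carrier by auto
  have Cc: "C \<in> carrier_mat a b" using V'c Bc by (simp add: C_def)
  have eBC: "eqv a b B C" unfolding C_def
    by (rule eqv_transpose[OF Bc]) (rule eqv_left[OF V' Bt])
  have eAC: "eqv a b A C" by (rule eqv_trans[OF A eAB eBC])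
  have Ce: "C $$ (i,j) = (V' * transpose_mat B) $$ (j,i)" if "i < a" "j < b" for i j
    using that V'c Bc by (simp add: C_def)
  define g' where "g' = C $$ (0,0)"
  have g'nz: "g' \<noteq> 0" using v2 Ce[of 0 0] a b by (simp add: g'_def)
  have g'dvd: "g' dvd B $$ (0,j)" if "j < b" for j
    using v3 that Ce[of 0 0] a b Bc by (simp add: g'_def)
  have C0j: "C $$ (0,j) = 0" if "0 < j" "j < b" for j using v1 that Ce[of 0 j] a by simp
  show ?case
  proof (cases "\<forall>j < b. g dvd B $$ (0,j)")
    case True
    hence "\<forall>c < a. (V' * transpose_mat B) $$ (0,c) = transpose_mat B $$ (0,c)"
      using v4 Bc by (simp add: g_def)
    hence "C $$ (i,0) = B $$ (i,0)" if "i < a" for i using Ce[of i 0] that b Bc by simp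
    hence "C $$ (i,0) = 0" if "0 < i" "i < a" for i using that u1 by (simp add: B_def)
    thus ?thesis using eAC Cc g'nz C0j by (intro exI[of _ C]) (auto simp: g'_def)
  next
    case False
    then obtain j where j: "j < b" "\<not> g dvd B $$ (0,j)" by auto
    have "g' dvd g" using g'dvd[of 0] b by (simp add: g_def)
    hence "degree g' \<le> degree g" using gnz by (rule dvd_imp_degree_le)
    moreover have "degree g' \<noteq> degree g"
    proof
      assume "degree g' = degree g"
      hence "g dvd g'" using same_degree_dvd \<open>g' dvd g\<close> gnz by blast
      hence "g dvd B $$ (0,j)" using g'dvd[OF j(1)] dvd_trans by blast
      with j show False by simp
    qed
    ultimately have "degree (C $$ (0,0)) < degree (A $$ (0,0))" using gdeg by (simp add: g'_def)
    from less.hyps[OF this Cc a b] g'nz obtain D where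
      "eqv a b C D \<and> D \<in> carrier_mat a b \<and> D $$ (0,0) \<noteq> 0 \<and>
       (\<forall>i. 0 < i \<and> i < a \<longrightarrow> D $$ (i,0) = 0) \<and> (\<forall>j. 0 < j \<and> j < b \<longrightarrow> D $$ (0,j) = 0)"
      by (auto simp: g'_def)
    thus ?thesis using eqv_trans[OF A eAC] by blast
  qed
qed



lemma swap_row0: assumes A: "A \<in> carrier_mat a b" and i0: "i0 < a"
  shows "\<exists>R. inv_ex R a \<and> (\<forall>c<b. (R * A) $$ (0,c) = A $$ (i0,c))"
proof (cases "i0 = 0")
  case True thus ?thesis using A by (intro exI[of _ "1\<^sub>m a"]) (auto simp: inv_ex_one)
next
  case False
  have ij: "0 < a" "i0 < a" "0 \<noteq> i0" using i0 False by auto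
  show ?thesis
  proof (intro exI[of _ "tr a 0 i0 0 1 (-1) 0"] conjI allI impI)
    show "inv_ex (tr a 0 i0 0 1 (- 1) 0) a" by (rule tr_inv) (use ij in auto)
    fix c assume "c < b"
    thus "(tr a 0 i0 0 1 (- 1) 0 * A) $$ (0, c) = A $$ (i0, c)" using ij
      by (subst tr_mult[OF ij A]) auto
  qed
qed

lemma pivot:
  assumes A: "A \<in> carrier_mat a b" and ij: "i0 < a" "j0 < b" and nz: "A $$ (i0,j0) \<noteq> 0"
  shows "\<exists>B. eqv a b A B \<and> B \<in> carrier_mat a b \<and> B $$ (0,0) \<noteq> 0 \<and>
    (\<forall>i. 0 < i \<and> i < a \<longrightarrow> B $$ (i,0) = 0) \<and> (\<forall>j. 0 < j \<and> j < b \<longrightarrow> B $$ (0,j) = 0)"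
proof -
  obtain R where R: "inv_ex R a" and r: "\<forall>c<b. (R * A) $$ (0,c) = A $$ (i0,c)"
    using swap_row0[OF A ij(1)] by blast
  define A1 where "A1 = R * A"
  have A1c: "A1 \<in> carrier_mat a b" using inv_ex_carrier[OF R] A by (simp add: A1_def)
  have e1: "eqv a b A A1" unfolding A1_def by (rule eqv_left[OF R A])
  have A1t: "transpose_mat A1 \<in> carrier_mat b a" using A1c by simp
  obtain S where S: "inv_ex S b" and s: "\<forall>c<a. (S * transpose_mat A1) $$ (0,c) = transpose_mat A1 $$ (j0,c)"
    using swap_row0[OF A1t ij(2)] by blast
  define A2 where "A2 = transpose_mat (S * transpose_mat A1)"
  have Sc: "S \<in> carrier_mat b b" using inv_ex_carrier[OF S] .
  have A2c: "A2 \<in> carrier_mat a b" using Sc A1c by (simp add: A2_def)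
  have e2: "eqv a b A1 A2" unfolding A2_def by (rule eqv_transpose[OF A1c]) (rule eqv_left[OF S A1t])
  have "A2 $$ (0,0) = (S * transpose_mat A1) $$ (0,0)"
    using ij A1c Sc by (simp add: A2_def)
  also have "\<dots> = A1 $$ (0, j0)" using s ij A1c by simp
  also have "\<dots> = A $$ (i0,j0)" using r ij by (simp add: A1_def)
  finally have "A2 $$ (0,0) = A $$ (i0,j0)" .
  hence "A2 $$ (0,0) \<noteq> 0" using nz by simp
  moreover have "0 < a" "0 < b" using ij by auto
  ultimately obtain B where "eqv a b A2 B \<and> B \<in> carrier_mat a b \<and> B $$ (0,0) \<noteq> 0 \<and>
    (\<forall>i. 0 < i \<and> i < a \<longrightarrow> B $$ (i,0) = 0) \<and> (\<forall>j. 0 < j \<and> j < b \<longrightarrow> B $$ (0,j) = 0)"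
    using pivot0[OF A2c] by blast
  moreover have "eqv a b A A2" by (rule eqv_trans[OF A e1 e2])
  ultimately show ?thesis using eqv_trans[OF A] by blast
qed



lemma diag:
  "A \<in> carrier_mat a b \<Longrightarrow> \<exists>B k. eqv a b A B \<and> B \<in> carrier_mat a b \<and> k \<le> a \<and> k \<le> b \<and>
     (\<forall>i<a. \<forall>j<b. B $$ (i,j) \<noteq> 0 \<longrightarrow> i = j \<and> i < k) \<and> (\<forall>i<k. monic (B $$ (i,i)))"
proof (induction a arbitrary: b A)
  case 0
  thus ?case by (intro exI[of _ A] exI[of _ 0]) (auto simp: eqv_refl)
next
  case (Suc a' b A)
  note A = Suc.prems
  show ?case
  proof (cases "\<forall>i<Suc a'. \<forall>j<b. A $$ (i,j) = 0")
    case True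
    thus ?thesis using A by (intro exI[of _ A] exI[of _ 0]) (auto simp: eqv_refl)
  next
    case False
    then obtain i0 j0 where ij: "i0 < Suc a'" "j0 < b" "A $$ (i0,j0) \<noteq> 0" by auto
    then obtain b' where b: "b = Suc b'" by (cases b) auto
    obtain B where eAB: "eqv (Suc a') b A B" and Bc: "B \<in> carrier_mat (Suc a') b" and B00: "B $$ (0,0) \<noteq> 0"
      and Bc0: "\<forall>i. 0 < i \<and> i < Suc a' \<longrightarrow> B $$ (i,0) = 0" and B0r: "\<forall>j. 0 < j \<and> j < b \<longrightarrow> B $$ (0,j) = 0"
      using pivot[OF A ij] by blast
    define M where "M = mat 1 1 (\<lambda>_. B $$ (0,0))"
    define A' where "A' = mat a' b' (\<lambda>(i,j). B $$ (Suc i, Suc j))"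
    have Mc: "M \<in> carrier_mat 1 1" by (simp add: M_def)
    have A'c: "A' \<in> carrier_mat a' b'" by (simp add: A'_def)
    have Bblk: "B = four_block_mat M (0\<^sub>m 1 b') (0\<^sub>m a' 1) A'"
    proof (rule eq_matI)
      fix i j assume "i < dim_row (four_block_mat M (0\<^sub>m 1 b') (0\<^sub>m a' 1) A')"
        "j < dim_col (four_block_mat M (0\<^sub>m 1 b') (0\<^sub>m a' 1) A')"
      hence ij': "i < Suc a'" "j < Suc b'" by (auto simp: M_def A'_def)
      show "B $$ (i,j) = four_block_mat M (0\<^sub>m 1 b') (0\<^sub>m a' 1) A' $$ (i,j)"
        using ij' Bc0 B0r b by (cases i; cases j) (auto simp: M_def A'_def)
    qed (use Bc b in \<open>auto simp: M_def A'_def\<close>)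
    obtain B' k' where eA'B': "eqv a' b' A' B'" and B'c: "B' \<in> carrier_mat a' b'" and k': "k' \<le> a'" "k' \<le> b'"
      and B'z: "\<forall>i<a'. \<forall>j<b'. B' $$ (i,j) \<noteq> 0 \<longrightarrow> i = j \<and> i < k'" and B'm: "\<forall>i<k'. monic (B' $$ (i,i))"
      using Suc.IH[OF A'c] by blast
    obtain U' V' where U': "inv_ex U' a'" and V': "inv_ex V' b'" and B': "B' = U' * A' * V'"
      using eA'B' by (auto simp: eqv_def)
    have U'c: "U' \<in> carrier_mat a' a'" and V'c: "V' \<in> carrier_mat b' b'" using U' V' inv_ex_carrier by auto
    define U2 where "U2 = four_block_mat (1\<^sub>m 1) (0\<^sub>m 1 a') (0\<^sub>m a' 1) U'"
    define V2 where "V2 = four_block_mat (1\<^sub>m 1) (0\<^sub>m 1 b') (0\<^sub>m b' 1) V'"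
    have U2: "inv_ex U2 (Suc a')" using inv_ex_block[OF inv_ex_one[of 1] U'] by (simp add: U2_def)
    have V2: "inv_ex V2 b" using inv_ex_block[OF inv_ex_one[of 1] V'] by (simp add: V2_def b)
    have "U2 * B = four_block_mat M (0\<^sub>m 1 b') (0\<^sub>m a' 1) (U' * A')"
      unfolding U2_def Bblk
      by (subst mult_four_block_mat[of _ 1 1 _ a' _ a' _ _ 1 _ b']) (use Mc A'c U'c in auto)
    hence "U2 * B * V2 = four_block_mat M (0\<^sub>m 1 b') (0\<^sub>m a' 1) (U' * A') * V2" by simp
    also have "\<dots> = four_block_mat M (0\<^sub>m 1 b') (0\<^sub>m a' 1) B'"
      unfolding V2_def B'
      by (subst mult_four_block_mat[of _ 1 1 _ b' _ a' _ _ 1 _ b']) (use Mc A'c U'c V'c in auto)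
    finally have C: "U2 * B * V2 = four_block_mat M (0\<^sub>m 1 b') (0\<^sub>m a' 1) B'" .
    define C where "C = U2 * B * V2"
    have eBC: "eqv (Suc a') b B C" unfolding eqv_def C_def using U2 V2 by blast
    have Cc: "C \<in> carrier_mat (Suc a') b" using eqv_carrier[OF eBC Bc] .
    have Ce: "C $$ (i,j) = (if i = 0 then (if j = 0 then B $$ (0,0) else 0) else if j = 0 then 0 else B' $$ (i - 1, j - 1))"
      if "i < Suc a'" "j < b" for i j
      using that B'c b unfolding C_def C by (auto simp: M_def)
    define d where "d = (\<lambda>i::nat. if i = 0 then [:1 / lead_coeff (B $$ (0,0)):] else 1)"
    define e where "e = (\<lambda>i::nat. if i = 0 then [:lead_coeff (B $$ (0,0)):] else 1)"
    have de: "d i * e i = 1" for i using B00 by (auto simp: d_def e_def)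
    have D: "inv_ex (dm (Suc a') d) (Suc a')" by (rule dm_inv) (rule de)
    define F where "F = dm (Suc a') d * C"
    have eCF: "eqv (Suc a') b C F" unfolding F_def by (rule eqv_left[OF D Cc])
    have Fc: "F \<in> carrier_mat (Suc a') b" using eqv_carrier[OF eCF Cc] .
    have Fe: "F $$ (i,j) = d i * C $$ (i,j)" if "i < Suc a'" "j < b" for i j
      unfolding F_def by (rule dm_mult[OF Cc that])
    have Z: "\<forall>i<Suc a'. \<forall>j<b. F $$ (i,j) \<noteq> 0 \<longrightarrow> i = j \<and> i < Suc k'"
    proof (intro allI impI)
      fix i j assume i: "i < Suc a'" and j: "j < b" and nz: "F $$ (i,j) \<noteq> 0"
      show "i = j \<and> i < Suc k'"
      proof (cases "i = 0")
        case True thus ?thesis using nz Fe[OF i j] Ce[OF i j] by (auto split: if_splits)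
      next
        case False
        hence j0: "j \<noteq> 0" and nz': "B' $$ (i - 1, j - 1) \<noteq> 0" using nz Fe[OF i j] Ce[OF i j] by (auto simp: d_def split: if_splits)
        have "i - 1 < a'" "j - 1 < b'" using i j b False j0 by auto
        hence "i - 1 = j - 1 \<and> i - 1 < k'" using B'z nz' by blast
        thus ?thesis using False j0 by auto
      qed
    qed
    have Mo: "\<forall>i<Suc k'. monic (F $$ (i,i))"
    proof (intro allI impI)
      fix i assume i: "i < Suc k'"
      have i': "i < Suc a'" "i < b" using i k' b by auto
      show "monic (F $$ (i,i))"
      proof (cases "i = 0")
        case True
        hence "F $$ (i,i) = smult (1 / lead_coeff (B $$ (0,0))) (B $$ (0,0))"
          using Fe[OF i'] Ce[OF i'] by (simp add: d_def)
        thus ?thesis using B00 by (simp add: monic_def)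
      next
        case False
        hence "F $$ (i,i) = B' $$ (i - 1, i - 1)" using Fe[OF i'] Ce[OF i'] by (simp add: d_def)
        thus ?thesis using B'm False i by simp
      qed
    qed
    have "eqv (Suc a') b A F" using eqv_trans[OF A eAB eqv_trans[OF Bc eBC eCF]] .
    thus ?thesis using Fc Z Mo k' b by (intro exI[of _ F] exI[of _ "Suc k'"]) auto
  qed
qed



definition NF :: "nat \<Rightarrow> nat \<Rightarrow> real poly mat \<Rightarrow> real poly mat \<Rightarrow> nat \<Rightarrow> nat \<Rightarrow> nat \<Rightarrow> (nat \<Rightarrow> nat) \<Rightarrow> (nat \<Rightarrow> nat) \<Rightarrow> bool" where
  "NF l n X Y rP m q r s \<longleftrightarrow>
    rP + m + (\<Sum>a<q. r a) = n \<and> rP + (\<Sum>a<q. r a) + (\<Sum>a<q. s a) = l \<and>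
    diag_monic_block X 0 0 rP \<and>
    block_zero X (rowP rP) (col0 rP m) \<and>
    (\<forall>a<q. block_zero X (rowR rP r a \<union> rowS rP r q s a)
              (colP rP \<union> col0 rP m \<union> (\<Union>b\<in>{..a}. colC rP m r b))) \<and>
    (\<forall>a<q. block_zero Y (rowR rP r a)
              (colP rP \<union> col0 rP m \<union> (\<Union>b\<in>{..<a}. colC rP m r b))) \<and>
    (\<forall>a<q. diag_monic_block Y (rP + (\<Sum>i<a. r i)) (rP + m + (\<Sum>i<a. r i)) (r a)) \<and>
    (\<forall>a<q. block_zero Y (rowS rP r q s a)
              (colP rP \<union> col0 rP m \<union> (\<Union>b\<in>{..a}. colC rP m r b)))"

lemma sum_upd_le: "(a::nat) \<le> q \<Longrightarrow> (\<Sum>i<a. (f(q := v)) i) = (\<Sum>i<a. f i)"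
  by (rule sum.cong) (auto simp: less_le_trans)

lemma sum_mono_lt: "(a::nat) \<le> q \<Longrightarrow> (\<Sum>i<a. f i) \<le> (\<Sum>i<q. (f i :: nat))"
  using sum_mono2[of "{..<q}" "{..<a}" f] by auto

lemma step_nf:
  fixes X Y Xr Yr E Xf Yf :: "real poly mat"
  assumes IH: "NF k (n - t) Xr Yr rP m q' r' s'"
    and kl: "k < l" and tl: "t \<le> l - k" and tn: "t \<le> n"
    and a: "\<And>i j. i < k \<Longrightarrow> j < n - t \<Longrightarrow> X $$ (i,j) = Xr $$ (i,j) \<and> Y $$ (i,j) = Yr $$ (i,j)"
    and b: "\<And>i j. k \<le> i \<Longrightarrow> i < l \<Longrightarrow> j < n \<Longrightarrow> X $$ (i,j) = 0"
    and c: "\<And>i j. k \<le> i \<Longrightarrow> i < l \<Longrightarrow> j < n - t \<Longrightarrow> Y $$ (i,j) = 0"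
    and d: "\<And>i j. k \<le> i \<Longrightarrow> i < l \<Longrightarrow> n - t \<le> j \<Longrightarrow> j < n \<Longrightarrow> Y $$ (i,j) = E $$ (i - k, j - (n - t))"
    and Ez: "\<And>i j. i < l - k \<Longrightarrow> j < n \<Longrightarrow> E $$ (i,j) \<noteq> 0 \<Longrightarrow> i = j \<and> i < t"
    and Em: "\<And>i. i < t \<Longrightarrow> monic (E $$ (i,i))"
    and sig: "\<sigma> = (\<lambda>p. if p < rP + (\<Sum>i<q'. r' i) then p else if p < rP + (\<Sum>i<q'. r' i) + t
                    then k + (p - (rP + (\<Sum>i<q'. r' i))) else if p < k + t then p - t else p)"
    and Xf: "\<And>p j. p < l \<Longrightarrow> j < n \<Longrightarrow> Xf $$ (p,j) = X $$ (\<sigma> p, j)"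
    and Yf: "\<And>p j. p < l \<Longrightarrow> j < n \<Longrightarrow> Yf $$ (p,j) = Y $$ (\<sigma> p, j)"
  shows "NF l n Xf Yf rP m (Suc q') (r'(q' := t)) (s'(q' := l - k - t))"
proof -
  define R where "R = (\<lambda>a. \<Sum>i<a. r' i)"
  define S where "S = (\<lambda>a. \<Sum>i<a. s' i)"
  define r where "r = r'(q' := t)"
  define s where "s = s'(q' := l - k - t)"
  define A0 where "A0 = rP + R q'"
  have Rr: "(\<Sum>i<a. r i) = R a" if "a \<le> q'" for a using that unfolding r_def R_def by (rule sum_upd_le)
  have Ss: "(\<Sum>i<a. s i) = S a" if "a \<le> q'" for a using that unfolding s_def S_def by (rule sum_upd_le)
  have Rq: "(\<Sum>i<Suc q'. r i) = R q' + t" using Rr[of q'] by (simp add: r_def)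
  have Sq: "(\<Sum>i<Suc q'. s i) = S q' + (l - k - t)" using Ss[of q'] by (simp add: s_def)
  have RS: "R (Suc a) = R a + r' a" "S (Suc a) = S a + s' a" for a by (simp_all add: R_def S_def)
  have Rmono: "R a \<le> R q'" "S a \<le> S q'" if "a \<le> q'" for a using that sum_mono_lt unfolding R_def S_def by auto
  have ra: "r a = r' a" "s a = s' a" if "a < q'" for a using that by (auto simp: r_def s_def)
  from IH have
    n1: "rP + m + R q' = n - t" and n2: "rP + R q' + S q' = k" and
    i1: "diag_monic_block Xr 0 0 rP" and
    i2: "block_zero Xr (rowP rP) (col0 rP m)" and
    i3: "\<forall>a<q'. block_zero Xr (rowR rP r' a \<union> rowS rP r' q' s' a)
              (colP rP \<union> col0 rP m \<union> (\<Union>b\<in>{..a}. colC rP m r' b))" and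
    i4: "\<forall>a<q'. block_zero Yr (rowR rP r' a)
              (colP rP \<union> col0 rP m \<union> (\<Union>b\<in>{..<a}. colC rP m r' b))" and
    i5: "\<forall>a<q'. diag_monic_block Yr (rP + R a) (rP + m + R a) (r' a)" and
    i6: "\<forall>a<q'. block_zero Yr (rowS rP r' q' s' a)
              (colP rP \<union> col0 rP m \<union> (\<Union>b\<in>{..a}. colC rP m r' b))"
    unfolding NF_def R_def S_def by auto
  have sigA: "\<sigma> p = p" if "p < A0" for p using that by (simp add: sig A0_def R_def)
  have sigB: "\<sigma> p = k + (p - A0)" if "A0 \<le> p" "p < A0 + t" for p using that by (simp add: sig A0_def R_def)
  have sigC: "\<sigma> p = p - t" if "A0 + t \<le> p" "p < k + t" for p using that by (simp add: sig A0_def R_def)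
  have sigD: "\<sigma> p = p" if "k + t \<le> p" for p using that n2 by (simp add: sig A0_def R_def)
  have k_eq: "k = A0 + S q'" using n2 by (simp add: A0_def)
  have kl': "k + t \<le> l" using kl tl by simp
  have A0k: "A0 \<le> k" "rP \<le> A0" using k_eq by (auto simp: A0_def)
  have nt: "rP + m \<le> n - t" using n1 by simp
  have Xe: "Xf $$ (p,j) = Xr $$ (p,j)" "Yf $$ (p,j) = Yr $$ (p,j)" if "p < A0" "j < n - t" for p j
    using that Xf[of p j] Yf[of p j] sigA[of p] a[of p j] A0k kl by auto
  have Xe2: "Xf $$ (p,j) = Xr $$ (p - t,j)" "Yf $$ (p,j) = Yr $$ (p - t,j)" if "A0 + t \<le> p" "p < k + t" "j < n - t" for p j
    using that Xf[of p j] Yf[of p j] sigC[of p] a[of "p - t" j] A0k kl' by auto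
  have XeB: "Xf $$ (p,j) = 0" if "A0 \<le> p" "p < A0 + t" "j < n" for p j
    using that Xf[of p j] sigB[of p] b[of "k + (p - A0)" j] A0k kl' by auto
  have YeB: "Yf $$ (p,j) = 0" if "A0 \<le> p" "p < A0 + t" "j < n - t" for p j
    using that Yf[of p j] sigB[of p] c[of "k + (p - A0)" j] A0k kl' by auto
  have YeB2: "Yf $$ (p,j) = E $$ (p - A0, j - (n - t))" if "A0 \<le> p" "p < A0 + t" "n - t \<le> j" "j < n" for p j
    using that Yf[of p j] sigB[of p] d[of "k + (p - A0)" j] A0k kl' by auto
  have XeD: "Xf $$ (p,j) = 0" if "k + t \<le> p" "p < l" "j < n" for p j
    using that Xf[of p j] sigD[of p] b[of p j] by auto
  have YeD: "Yf $$ (p,j) = 0" if "k + t \<le> p" "p < l" "j < n" for p j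
  proof (cases "j < n - t")
    case True thus ?thesis using that Yf[of p j] sigD[of p] c[of p j] by auto
  next
    case False
    hence "Yf $$ (p,j) = E $$ (p - k, j - (n - t))" using that Yf[of p j] sigD[of p] d[of p j] by auto
    moreover have "E $$ (p - k, j - (n - t)) = 0" using Ez[of "p - k" "j - (n - t)"] that by force
    ultimately show ?thesis by simp
  qed
  have colb: "j < rP + m + R q' + t" if "j \<in> colP rP \<union> col0 rP m \<union> (\<Union>b\<in>{..q'}. colC rP m r b)" for j
  proof -
    { fix b assume b: "b \<le> q'" "j \<in> colC rP m r b"
      hence "j < rP + m + (\<Sum>i<Suc b. r i)" by (simp add: colC_def)
      also have "\<dots> \<le> rP + m + (\<Sum>i<Suc q'. r i)" using sum_mono_lt[of "Suc b" "Suc q'" r] b by simp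
      finally have "j < rP + m + R q' + t" using Rq by simp }
    thus ?thesis using that by (auto simp: colP_def col0_def)
  qed
  have colb': "j < rP + m + R q'" if "j \<in> colP rP \<union> col0 rP m \<union> (\<Union>b\<in>{..<q'}. colC rP m r b)" for j
  proof -
    { fix b assume b: "b < q'" "j \<in> colC rP m r b"
      hence "j < rP + m + (\<Sum>i<Suc b. r i)" by (simp add: colC_def)
      also have "\<dots> = rP + m + R (Suc b)" using Rr[of "Suc b"] b by simp
      also have "\<dots> \<le> rP + m + R q'" using Rmono[of "Suc b"] b by simp
      finally have "j < rP + m + R q'" . }
    thus ?thesis using that by (auto simp: colP_def col0_def)
  qed
  have colsame: "colC rP m r b = colC rP m r' b" if "b < q'" for b
    using that Rr[of b] Rr[of "Suc b"] by (simp add: colC_def R_def)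
  have rowRsame: "rowR rP r a = rowR rP r' a" if "a < q'" for a
    using that Rr[of a] Rr[of "Suc a"] by (simp add: rowR_def R_def)
  show ?thesis
    unfolding NF_def r_def[symmetric] s_def[symmetric]
  proof (intro conjI allI impI)
    show "rP + m + (\<Sum>a<Suc q'. r a) = n" using Rq n1 tn by simp
    show "rP + (\<Sum>a<Suc q'. r a) + (\<Sum>a<Suc q'. s a) = l" using Rq Sq n2 kl tl by simp
  next
    show "diag_monic_block Xf 0 0 rP"
      unfolding diag_monic_block_def
    proof (intro allI impI)
      fix x y assume xy: "x < rP" "y < rP"
      hence "Xf $$ (0 + x, 0 + y) = Xr $$ (0 + x, 0 + y)" using Xe[of x y] A0k nt by simp
      thus "(x \<noteq> y \<longrightarrow> Xf $$ (0 + x, 0 + y) = 0) \<and> (x = y \<longrightarrow> monic (Xf $$ (0 + x, 0 + x)))"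
        using i1 xy unfolding diag_monic_block_def by auto
    qed
  next
    show "block_zero Xf (rowP rP) (col0 rP m)"
      using i2 Xe A0k nt unfolding block_zero_def rowP_def col0_def by auto
  next
    fix a assume "a < Suc q'"
    show "block_zero Xf (rowR rP r a \<union> rowS rP r (Suc q') s a)
              (colP rP \<union> col0 rP m \<union> (\<Union>b\<in>{..a}. colC rP m r b))"
      unfolding block_zero_def
    proof (intro ballI)
      fix i j assume i: "i \<in> rowR rP r a \<union> rowS rP r (Suc q') s a"
        and j: "j \<in> colP rP \<union> col0 rP m \<union> (\<Union>b\<in>{..a}. colC rP m r b)"
      show "Xf $$ (i,j) = 0"
      proof (cases "a < q'")
        case True
        have j': "j \<in> colP rP \<union> col0 rP m \<union> (\<Union>b\<in>{..a}. colC rP m r' b)" using j colsame True by auto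
        have "j \<in> colP rP \<union> col0 rP m \<union> (\<Union>b\<in>{..<q'}. colC rP m r b)" using j True by auto
        hence jn: "j < n - t" using colb' n1 by fastforce
        from i show ?thesis
        proof
          assume "i \<in> rowR rP r a"
          hence i': "i \<in> rowR rP r' a" using rowRsame True by simp
          hence "i < A0" using Rmono[of "Suc a"] True by (simp add: rowR_def A0_def R_def)
          thus ?thesis using Xe[of i j] jn i3 True i' j' unfolding block_zero_def by auto
        next
          assume "i \<in> rowS rP r (Suc q') s a"
          hence ii: "A0 + t + S a \<le> i" "i < A0 + t + S (Suc a)" using Rq Ss[of a] Ss[of "Suc a"] True
            by (auto simp: rowS_def A0_def)
          hence i': "i - t \<in> rowS rP r' q' s' a" by (auto simp: rowS_def R_def S_def A0_def)
          have "i < k + t" using ii Rmono(2)[of "Suc a"] True k_eq by simp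
          thus ?thesis using Xe2[of i j] ii jn i3 True i' j' unfolding block_zero_def by auto
        qed
      next
        case False
        hence aq: "a = q'" using \<open>a < Suc q'\<close> by simp
        have jn: "j < n" using colb[of j] j aq n1 tn by auto
        from i show ?thesis
        proof
          assume "i \<in> rowR rP r a"
          hence "A0 \<le> i" "i < A0 + t" using aq Rq Rr[of q'] by (auto simp: rowR_def A0_def)
          thus ?thesis using XeB jn by simp
        next
          assume "i \<in> rowS rP r (Suc q') s a"
          hence "k + t \<le> i" "i < l" using aq Rq Ss[of q'] Sq k_eq kl' by (auto simp: rowS_def A0_def)
          thus ?thesis using XeD jn by simp
        qed
      qed
    qed
  next
    fix a assume "a < Suc q'"
    show "block_zero Yf (rowR rP r a)
              (colP rP \<union> col0 rP m \<union> (\<Union>b\<in>{..<a}. colC rP m r b))"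
      unfolding block_zero_def
    proof (intro ballI)
      fix i j assume i: "i \<in> rowR rP r a"
        and j: "j \<in> colP rP \<union> col0 rP m \<union> (\<Union>b\<in>{..<a}. colC rP m r b)"
      show "Yf $$ (i,j) = 0"
      proof (cases "a < q'")
        case True
        have j': "j \<in> colP rP \<union> col0 rP m \<union> (\<Union>b\<in>{..<a}. colC rP m r' b)" using j colsame True by auto
        have "j \<in> colP rP \<union> col0 rP m \<union> (\<Union>b\<in>{..<q'}. colC rP m r b)" using j True by auto
        hence jn: "j < n - t" using colb' n1 by fastforce
        have i': "i \<in> rowR rP r' a" using i rowRsame True by simp
        hence "i < A0" using Rmono[of "Suc a"] True by (simp add: rowR_def A0_def R_def)
        thus ?thesis using Xe(2)[of i j] jn i4 True i' j' unfolding block_zero_def by auto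
      next
        case False
        hence aq: "a = q'" using \<open>a < Suc q'\<close> by simp
        have jn: "j < n - t" using colb'[of j] j aq n1 by auto
        have "A0 \<le> i" "i < A0 + t" using i aq Rq Rr[of q'] by (auto simp: rowR_def A0_def)
        thus ?thesis using YeB jn by simp
      qed
    qed
  next
    fix a assume "a < Suc q'"
    show "diag_monic_block Yf (rP + (\<Sum>i<a. r i)) (rP + m + (\<Sum>i<a. r i)) (r a)"
      unfolding diag_monic_block_def
    proof (intro allI impI)
      fix x y assume x: "x < r a" and y: "y < r a"
      show "(x \<noteq> y \<longrightarrow> Yf $$ (rP + (\<Sum>i<a. r i) + x, rP + m + (\<Sum>i<a. r i) + y) = 0) \<and>
            (x = y \<longrightarrow> monic (Yf $$ (rP + (\<Sum>i<a. r i) + x, rP + m + (\<Sum>i<a. r i) + x)))"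
      proof (cases "a < q'")
        case True
        have sa: "(\<Sum>i<a. r i) = R a" using Rr[of a] True by simp
        have x': "x < r' a" "y < r' a" using x y ra True by auto
        have b1: "rP + R a + x < A0" "rP + R a + y < A0" using x' Rmono[of "Suc a"] True RS(1)[of a] by (auto simp: A0_def)
        have b2: "rP + m + R a + y < n - t" "rP + m + R a + x < n - t" using x' Rmono[of "Suc a"] True RS(1)[of a] n1 by auto
        have "Yf $$ (rP + R a + x, rP + m + R a + y) = Yr $$ (rP + R a + x, rP + m + R a + y)"
          "Yf $$ (rP + R a + x, rP + m + R a + x) = Yr $$ (rP + R a + x, rP + m + R a + x)"
          using Xe(2) b1 b2 by auto
        moreover have "diag_monic_block Yr (rP + R a) (rP + m + R a) (r' a)" using i5 True by simp
        ultimately show ?thesis using x' unfolding sa diag_monic_block_def by auto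
      next
        case False
        hence aq: "a = q'" using \<open>a < Suc q'\<close> by simp
        have sa: "(\<Sum>i<a. r i) = R q'" using Rr[of q'] aq by simp
        have rt: "r a = t" using aq by (simp add: r_def)
        have e: "Yf $$ (rP + R q' + x, rP + m + R q' + z) = E $$ (x, z)" if "z < t" for z
          using YeB2[of "rP + R q' + x" "rP + m + R q' + z"] x that rt n1 tn by (auto simp: A0_def)
        show ?thesis unfolding sa
        proof (intro conjI impI)
          assume "x \<noteq> y"
          thus "Yf $$ (rP + R q' + x, rP + m + R q' + y) = 0"
            using e[of y] y rt Ez[of x y] x tl tn by force
        next
          show "monic (Yf $$ (rP + R q' + x, rP + m + R q' + x))" using e[of x] x rt Em by simp
        qed
      qed
    qed
  next
    fix a assume "a < Suc q'"
    show "block_zero Yf (rowS rP r (Suc q') s a)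
              (colP rP \<union> col0 rP m \<union> (\<Union>b\<in>{..a}. colC rP m r b))"
      unfolding block_zero_def
    proof (intro ballI)
      fix i j assume i: "i \<in> rowS rP r (Suc q') s a"
        and j: "j \<in> colP rP \<union> col0 rP m \<union> (\<Union>b\<in>{..a}. colC rP m r b)"
      show "Yf $$ (i,j) = 0"
      proof (cases "a < q'")
        case True
        have j': "j \<in> colP rP \<union> col0 rP m \<union> (\<Union>b\<in>{..a}. colC rP m r' b)" using j colsame True by auto
        have "j \<in> colP rP \<union> col0 rP m \<union> (\<Union>b\<in>{..<q'}. colC rP m r b)" using j True by auto
        hence jn: "j < n - t" using colb' n1 by fastforce
        have ii: "A0 + t + S a \<le> i" "i < A0 + t + S (Suc a)" using i Rq Ss[of a] Ss[of "Suc a"] True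
          by (auto simp: rowS_def A0_def)
        hence i': "i - t \<in> rowS rP r' q' s' a" by (auto simp: rowS_def R_def S_def A0_def)
        have "i < k + t" using ii Rmono(2)[of "Suc a"] True k_eq by simp
        thus ?thesis using Xe2(2)[of i j] ii jn i6 True i' j' unfolding block_zero_def by auto
      next
        case False
        hence aq: "a = q'" using \<open>a < Suc q'\<close> by simp
        have jn: "j < n" using colb[of j] j aq n1 tn by auto
        have "k + t \<le> i" "i < l" using i aq Rq Ss[of q'] Sq k_eq kl' by (auto simp: rowS_def A0_def)
        thus ?thesis using YeD jn by simp
      qed
    qed
  qed
qed



lemma assoc_chain: assumes c: "U \<in> carrier_mat a a" "V \<in> carrier_mat b b" "U' \<in> carrier_mat a a" "V' \<in> carrier_mat b b"
  and A: "(A :: real poly mat) \<in> carrier_mat a b"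
  shows "U' * (U * A * V) * V' = U' * U * A * (V * V')"
proof -
  have "U' * (U * A * V) * V' = U' * (U * A * V * V')"
    by (rule assoc_mult_mat[of _ a a _ b _ b]) (use c A in auto)
  also have "U * A * V * V' = U * A * (V * V')"
    by (rule assoc_mult_mat[of _ a b _ b _ b]) (use c A in auto)
  also have "U' * (U * A * (V * V')) = U' * (U * A) * (V * V')"
    by (rule assoc_mult_mat[of _ a a _ b _ b, symmetric]) (use c A in auto)
  also have "U' * (U * A) = U' * U * A"
    by (rule assoc_mult_mat[of _ a a _ a _ b, symmetric]) (use c A in auto)
  finally show ?thesis .
qed

definition eqv2 :: "nat \<Rightarrow> nat \<Rightarrow> real poly mat \<Rightarrow> real poly mat \<Rightarrow> real poly mat \<Rightarrow> real poly mat \<Rightarrow> bool" where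
  "eqv2 a b P Q P' Q' \<longleftrightarrow> (\<exists>U V. inv_ex U a \<and> inv_ex V b \<and> P' = U * P * V \<and> Q' = U * Q * V)"

lemma eqv2_trans: assumes P: "P \<in> carrier_mat a b" and Q: "Q \<in> carrier_mat a b"
  and "eqv2 a b P Q P1 Q1" "eqv2 a b P1 Q1 P2 Q2" shows "eqv2 a b P Q P2 Q2"
proof -
  obtain U V where U: "inv_ex U a" and V: "inv_ex V b" and 1: "P1 = U * P * V" "Q1 = U * Q * V"
    using assms by (auto simp: eqv2_def)
  obtain U' V' where U': "inv_ex U' a" and V': "inv_ex V' b" and 2: "P2 = U' * P1 * V'" "Q2 = U' * Q1 * V'"
    using assms by (auto simp: eqv2_def)
  have c: "U \<in> carrier_mat a a" "V \<in> carrier_mat b b" "U' \<in> carrier_mat a a" "V' \<in> carrier_mat b b"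
    using U V U' V' inv_ex_carrier by auto
  show ?thesis unfolding eqv2_def using assoc_chain[OF c P] assoc_chain[OF c Q] 1 2
    inv_ex_mult[OF U' U] inv_ex_mult[OF V V'] by metis
qed

lemma mult_entry2: assumes "(A :: real poly mat) \<in> carrier_mat m n" "B \<in> carrier_mat n p" "i < m" "j < p"
  shows "(A * B) $$ (i,j) = (\<Sum>h\<in>{0..<n}. A $$ (i,h) * B $$ (h,j))"
  using assms by (auto simp: scalar_prod_def intro!: sum.cong)

lemma blk_left:
  assumes U: "(U :: real poly mat) \<in> carrier_mat k k" and W: "W \<in> carrier_mat c c" and X: "X \<in> carrier_mat (k + c) m"
    and ij: "i < k + c" "j < m"
  shows "(four_block_mat U (0\<^sub>m k c) (0\<^sub>m c k) W * X) $$ (i,j) =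
    (if i < k then (\<Sum>h\<in>{0..<k}. U $$ (i,h) * X $$ (h,j)) else (\<Sum>h\<in>{0..<c}. W $$ (i - k,h) * X $$ (h + k,j)))"
proof -
  let ?F = "four_block_mat U (0\<^sub>m k c) (0\<^sub>m c k) W"
  have Fc: "?F \<in> carrier_mat (k + c) (k + c)" using U W by simp
  have "(?F * X) $$ (i,j) = (\<Sum>h\<in>{0..<k+c}. ?F $$ (i,h) * X $$ (h,j))" by (rule mult_entry[OF Fc X ij])
  also have "\<dots> = (\<Sum>h\<in>{0..<k}. ?F $$ (i,h) * X $$ (h,j)) + (\<Sum>h\<in>{k..<k+c}. ?F $$ (i,h) * X $$ (h,j))"
    by (rule sum.atLeastLessThan_concat[symmetric]) auto
  also have "(\<Sum>h\<in>{k..<k+c}. ?F $$ (i,h) * X $$ (h,j)) = (\<Sum>h\<in>{0..<c}. ?F $$ (i,h + k) * X $$ (h + k,j))"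
    using sum.shift_bounds_nat_ivl[of "\<lambda>h. ?F $$ (i,h) * X $$ (h,j)" 0 k c] by (simp add: add.commute)
  finally have e: "(?F * X) $$ (i,j) = (\<Sum>h\<in>{0..<k}. ?F $$ (i,h) * X $$ (h,j)) + (\<Sum>h\<in>{0..<c}. ?F $$ (i,h + k) * X $$ (h + k,j))" .
  show ?thesis
  proof (cases "i < k")
    case True
    have "(\<Sum>h\<in>{0..<k}. ?F $$ (i,h) * X $$ (h,j)) = (\<Sum>h\<in>{0..<k}. U $$ (i,h) * X $$ (h,j))"
      by (rule sum.cong) (use True U W in auto)
    moreover have "(\<Sum>h\<in>{0..<c}. ?F $$ (i,h + k) * X $$ (h + k,j)) = 0"
      by (rule sum.neutral) (use True U W in auto)
    ultimately show ?thesis using e True by simp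
  next
    case False
    have "(\<Sum>h\<in>{0..<k}. ?F $$ (i,h) * X $$ (h,j)) = 0"
      by (rule sum.neutral) (use False ij U W in auto)
    moreover have "(\<Sum>h\<in>{0..<c}. ?F $$ (i,h + k) * X $$ (h + k,j)) = (\<Sum>h\<in>{0..<c}. W $$ (i - k,h) * X $$ (h + k,j))"
      by (rule sum.cong) (use False ij U W in auto)
    ultimately show ?thesis using e False by simp
  qed
qed

lemma blk_right:
  assumes V: "(V :: real poly mat) \<in> carrier_mat k k" and W: "W \<in> carrier_mat c c" and X: "X \<in> carrier_mat m (k + c)"
    and ij: "i < m" "j < k + c"
  shows "(X * four_block_mat V (0\<^sub>m k c) (0\<^sub>m c k) W) $$ (i,j) =
    (if j < k then (\<Sum>h\<in>{0..<k}. X $$ (i,h) * V $$ (h,j)) else (\<Sum>h\<in>{0..<c}. X $$ (i,h + k) * W $$ (h,j - k)))"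
proof -
  let ?F = "four_block_mat V (0\<^sub>m k c) (0\<^sub>m c k) W"
  have Fc: "?F \<in> carrier_mat (k + c) (k + c)" using V W by simp
  have "(X * ?F) $$ (i,j) = (\<Sum>h\<in>{0..<k+c}. X $$ (i,h) * ?F $$ (h,j))"
    by (rule mult_entry2[OF X Fc ij])
  also have "\<dots> = (\<Sum>h\<in>{0..<k}. X $$ (i,h) * ?F $$ (h,j)) + (\<Sum>h\<in>{k..<k+c}. X $$ (i,h) * ?F $$ (h,j))"
    by (rule sum.atLeastLessThan_concat[symmetric]) auto
  also have "(\<Sum>h\<in>{k..<k+c}. X $$ (i,h) * ?F $$ (h,j)) = (\<Sum>h\<in>{0..<c}. X $$ (i,h + k) * ?F $$ (h + k,j))"
    using sum.shift_bounds_nat_ivl[of "\<lambda>h. X $$ (i,h) * ?F $$ (h,j)" 0 k c] by (simp add: add.commute)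
  finally have e: "(X * ?F) $$ (i,j) = (\<Sum>h\<in>{0..<k}. X $$ (i,h) * ?F $$ (h,j)) + (\<Sum>h\<in>{0..<c}. X $$ (i,h + k) * ?F $$ (h + k,j))" .
  show ?thesis
  proof (cases "j < k")
    case True
    have "(\<Sum>h\<in>{0..<k}. X $$ (i,h) * ?F $$ (h,j)) = (\<Sum>h\<in>{0..<k}. X $$ (i,h) * V $$ (h,j))"
      by (rule sum.cong) (use True V W in auto)
    moreover have "(\<Sum>h\<in>{0..<c}. X $$ (i,h + k) * ?F $$ (h + k,j)) = 0"
      by (rule sum.neutral) (use True V W in auto)
    ultimately show ?thesis using e True by simp
  next
    case False
    have "(\<Sum>h\<in>{0..<k}. X $$ (i,h) * ?F $$ (h,j)) = 0"
      by (rule sum.neutral) (use False ij V W in auto)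
    moreover have "(\<Sum>h\<in>{0..<c}. X $$ (i,h + k) * ?F $$ (h + k,j)) = (\<Sum>h\<in>{0..<c}. X $$ (i,h + k) * W $$ (h,j - k))"
      by (rule sum.cong) (use False ij V W in auto)
    ultimately show ?thesis using e False by simp
  qed
qed



lemma sum_one_mat: assumes "j < t"
  shows "(\<Sum>h\<in>{0..<t}. f h * (1\<^sub>m t :: real poly mat) $$ (h, j)) = f j"
proof -
  have "(\<Sum>h\<in>{0..<t}. f h * (1\<^sub>m t :: real poly mat) $$ (h, j)) = (\<Sum>h\<in>{0..<t}. if h = j then f j else 0)"
    by (rule sum.cong) (use assms in auto)
  also have "\<dots> = f j" using assms by simp
  finally show ?thesis .
qed

lemma sum_one_mat_left: assumes "i < t"
  shows "(\<Sum>h\<in>{0..<t}. (1\<^sub>m t :: real poly mat) $$ (i, h) * f h) = f i"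
proof -
  have "(\<Sum>h\<in>{0..<t}. (1\<^sub>m t :: real poly mat) $$ (i, h) * f h) = (\<Sum>h\<in>{0..<t}. if h = i then f i else 0)"
    by (rule sum.cong) (use assms in auto)
  also have "\<dots> = f i" using assms by simp
  finally show ?thesis .
qed

lemma main: "P \<in> carrier_mat l n \<Longrightarrow> Q \<in> carrier_mat l n \<Longrightarrow>
  \<exists>P' Q' rP m q r s. eqv2 l n P Q P' Q' \<and> NF l n P' Q' rP m q r s"
proof (induction l arbitrary: n P Q rule: less_induct)
  case (less l n P Q)
  note P = less.prems(1) and Q = less.prems(2)
  obtain B0 k where eB: "eqv l n P B0" and B0c: "B0 \<in> carrier_mat l n" and kl: "k \<le> l" "k \<le> n"
    and Bz: "\<forall>i<l. \<forall>j<n. B0 $$ (i,j) \<noteq> 0 \<longrightarrow> i = j \<and> i < k" and Bm: "\<forall>i<k. monic (B0 $$ (i,i))"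
    using diag[OF P] by blast
  obtain U0 V0 where U0: "inv_ex U0 l" and V0: "inv_ex V0 n" and B0: "B0 = U0 * P * V0"
    using eB by (auto simp: eqv_def)
  define Q0 where "Q0 = U0 * Q * V0"
  have Q0c: "Q0 \<in> carrier_mat l n" using inv_ex_carrier[OF U0] inv_ex_carrier[OF V0] Q by (simp add: Q0_def)
  have e0: "eqv2 l n P Q B0 Q0" unfolding eqv2_def B0 Q0_def using U0 V0 by blast
  show ?case
  proof (cases "k = l")
    case True
    have "NF l n B0 Q0 l (n - l) 0 (\<lambda>_. 0) (\<lambda>_. 0)"
      unfolding NF_def
    proof (intro conjI allI impI)
      show "l + (n - l) + (\<Sum>a<0. (\<lambda>_. 0) a) = n" using kl True by simp
      show "l + (\<Sum>a<0. (\<lambda>_. 0) a) + (\<Sum>a<0. (\<lambda>_. 0) a) = l" by simp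
      show "diag_monic_block B0 0 0 l" unfolding diag_monic_block_def
      proof (intro allI impI conjI)
        fix x y assume xy: "x < l" "y < l"
        show "B0 $$ (0 + x, 0 + y) = 0" if "x \<noteq> y"
        proof -
          have "y < n" using xy True kl by simp
          thus ?thesis using Bz xy that by auto
        qed
        show "x = y \<Longrightarrow> monic (B0 $$ (0 + x, 0 + x))" using Bm xy True by simp
      qed
      show "block_zero B0 (rowP l) (col0 l (n - l))" unfolding block_zero_def rowP_def col0_def
      proof (intro ballI)
        fix i j assume "i \<in> {0..<l}" "j \<in> {l..<l + (n - l)}"
        hence "i < l" "j < n" "i \<noteq> j" using kl True by auto
        thus "B0 $$ (i,j) = 0" using Bz by auto
      qed
    qed auto
    thus ?thesis using e0 by blast
  next
    case False
    hence kl': "k < l" using kl by simp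
    define Q2 where "Q2 = mat (l - k) n (\<lambda>(i,j). Q0 $$ (i + k, j))"
    have Q2c: "Q2 \<in> carrier_mat (l - k) n" by (simp add: Q2_def)
    obtain E t where eE: "eqv (l - k) n Q2 E" and Ec: "E \<in> carrier_mat (l - k) n" and tl: "t \<le> l - k" "t \<le> n"
      and Ez: "\<forall>i<l-k. \<forall>j<n. E $$ (i,j) \<noteq> 0 \<longrightarrow> i = j \<and> i < t" and Em: "\<forall>i<t. monic (E $$ (i,i))"
      using diag[OF Q2c] by blast
    obtain W Y where W: "inv_ex W (l - k)" and Y: "inv_ex Y n" and E: "E = W * Q2 * Y"
      using eE by (auto simp: eqv_def)
    define \<rho> where "\<rho> = (\<lambda>j. if j < n - t then j + t else j - (n - t))"
    define \<rho>' where "\<rho>' = (\<lambda>j. if j < t then j + (n - t) else j - t)"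
    have rho: "inv_ex (pm n \<rho>) n" by (rule pm_inv[where \<tau> = \<rho>']) (use tl in \<open>auto simp: \<rho>_def \<rho>'_def\<close>)
    define Pm where "Pm = transpose_mat (pm n \<rho>)"
    have Pm: "inv_ex Pm n" unfolding Pm_def by (rule inv_ex_transpose[OF rho])
    define Y' where "Y' = Y * Pm"
    have Y': "inv_ex Y' n" unfolding Y'_def by (rule inv_ex_mult[OF Y Pm])
    define F where "F = four_block_mat (1\<^sub>m k) (0\<^sub>m k (l - k)) (0\<^sub>m (l - k) k) W"
    have F: "inv_ex F l" using inv_ex_block[OF inv_ex_one[of k] W] kl by (simp add: F_def)
    have Wc: "W \<in> carrier_mat (l - k) (l - k)" and Yc: "Y \<in> carrier_mat n n" and Pmc: "Pm \<in> carrier_mat n n"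
      and Y'c: "Y' \<in> carrier_mat n n" and Fc: "F \<in> carrier_mat l l"
      using W Y Pm Y' F inv_ex_carrier by auto
    define P1 where "P1 = F * B0 * Y'"
    define Q1 where "Q1 = F * Q0 * Y'"
    have e1: "eqv2 l n B0 Q0 P1 Q1" unfolding eqv2_def P1_def Q1_def using F Y' by blast
    have P1c: "P1 \<in> carrier_mat l n" and Q1c: "Q1 \<in> carrier_mat l n"
      using Fc B0c Q0c Y'c by (auto simp: P1_def Q1_def)
    have Flow: "(F * Z) $$ (i,j) = (\<Sum>h\<in>{0..<l-k}. W $$ (i-k,h) * Z $$ (h+k,j))"
      if "Z \<in> carrier_mat l n" "k \<le> i" "i < l" "j < n" for Z i j
    proof -
      have Z': "Z \<in> carrier_mat (k + (l - k)) n" using that kl by simp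
      show ?thesis using blk_left[of "1\<^sub>m k" k W "l - k" Z n i j] that Wc kl Z' by (simp add: F_def)
    qed
    have BY: "B0 * Y' \<in> carrier_mat l n" and QY: "Q0 * Y' \<in> carrier_mat l n" using B0c Q0c Y'c by auto
    have P1B: "P1 = F * (B0 * Y')" unfolding P1_def by (rule assoc_mult_mat[of _ l l _ n _ n]) (use Fc B0c Y'c in auto)
    have Q1B: "Q1 = F * (Q0 * Y')" unfolding Q1_def by (rule assoc_mult_mat[of _ l l _ n _ n]) (use Fc Q0c Y'c in auto)
    have P1low: "P1 $$ (i,j) = 0" if "k \<le> i" "i < l" "j < n" for i j
    proof -
      have "(B0 * Y') $$ (h + k, j) = 0" if "h < l - k" for h
      proof -
        have "(B0 * Y') $$ (h + k, j) = (\<Sum>g\<in>{0..<n}. B0 $$ (h + k, g) * Y' $$ (g, j))"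
          by (rule mult_entry2[OF B0c Y'c]) (use that \<open>j < n\<close> in auto)
        also have "\<dots> = 0"
        proof (rule sum.neutral, intro ballI)
          fix g assume g: "g \<in> {0..<n}"
          have "h + k < l" using that kl by simp
          thus "B0 $$ (h + k, g) * Y' $$ (g, j) = 0" using Bz[rule_format, of "h + k" g] g by auto
        qed
        finally show ?thesis .
      qed
      thus ?thesis using P1B Flow[OF BY that] by simp
    qed
    have WE: "W * (Q2 * Y') = E * Pm"
    proof -
      have "W * (Q2 * Y') = W * (Q2 * Y * Pm)" unfolding Y'_def
        by (subst assoc_mult_mat[of _ "l - k" n _ n _ n]) (use Q2c Yc Pmc in auto)
      also have "\<dots> = W * (Q2 * Y) * Pm"
        by (rule assoc_mult_mat[of _ "l - k" "l - k" _ n _ n, symmetric]) (use Wc Q2c Yc Pmc in auto)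
      also have "W * (Q2 * Y) = E" unfolding E
        by (rule assoc_mult_mat[of _ "l - k" "l - k" _ n _ n, symmetric]) (use Wc Q2c Yc in auto)
      finally show ?thesis .
    qed
    have Q1low: "Q1 $$ (i,j) = E $$ (i - k, \<rho> j)" if "k \<le> i" "i < l" "j < n" for i j
    proof -
      have Q2Y: "Q2 * Y' \<in> carrier_mat (l - k) n" using Q2c Y'c by auto
      have "(Q0 * Y') $$ (h + k, j) = (Q2 * Y') $$ (h, j)" if "h < l - k" for h
      proof -
        have "(Q0 * Y') $$ (h + k, j) = (\<Sum>g\<in>{0..<n}. Q0 $$ (h + k, g) * Y' $$ (g, j))"
          by (rule mult_entry2[OF Q0c Y'c]) (use that \<open>j < n\<close> in auto)
        also have "\<dots> = (\<Sum>g\<in>{0..<n}. Q2 $$ (h, g) * Y' $$ (g, j))"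
          by (rule sum.cong) (use that in \<open>auto simp: Q2_def\<close>)
        also have "\<dots> = (Q2 * Y') $$ (h, j)"
          by (rule mult_entry2[OF Q2c Y'c, symmetric]) (use that \<open>j < n\<close> in auto)
        finally show ?thesis .
      qed
      hence "Q1 $$ (i,j) = (\<Sum>h\<in>{0..<l-k}. W $$ (i-k,h) * (Q2 * Y') $$ (h,j))"
        using Q1B Flow[OF QY that] by simp
      also have "\<dots> = (W * (Q2 * Y')) $$ (i - k, j)"
        by (rule mult_entry2[OF Wc Q2Y, symmetric]) (use that in auto)
      also have "\<dots> = (E * Pm) $$ (i - k, j)" by (simp add: WE)
      also have "\<dots> = (pm n \<rho> * transpose_mat E) $$ (j, i - k)"
        unfolding Pm_def by (rule mult_transpose_entry[OF Ec pm_carrier]) (use that in auto)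
      also have "\<dots> = transpose_mat E $$ (\<rho> j, i - k)"
        by (rule pm_mult) (use that Ec tl in \<open>auto simp: \<rho>_def\<close>)
      also have "\<dots> = E $$ (i - k, \<rho> j)" using that Ec tl by (auto simp: \<rho>_def)
      finally show ?thesis .
    qed
    have Q1c0: "Q1 $$ (i,j) = 0" if "k \<le> i" "i < l" "j < n - t" for i j
    proof -
      have "Q1 $$ (i,j) = E $$ (i - k, j + t)" using Q1low[of i j] that by (simp add: \<rho>_def)
      moreover have "i - k < l - k" "j + t < n" using that by auto
      hence "E $$ (i - k, j + t) = 0"
      proof -
        assume a1: "i - k < l - k" "j + t < n"
        show ?thesis
        proof (rule ccontr)
          assume "E $$ (i - k, j + t) \<noteq> 0"
          hence "i - k = j + t \<and> i - k < t" using Ez a1 by blast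
          thus False by linarith
        qed
      qed
      ultimately show ?thesis by simp
    qed
    have Q1d: "Q1 $$ (i,j) = E $$ (i - k, j - (n - t))" if "k \<le> i" "i < l" "n - t \<le> j" "j < n" for i j
      using Q1low[of i j] that by (simp add: \<rho>_def)
    define P1a where "P1a = mat k (n - t) (\<lambda>(i,j). P1 $$ (i,j))"
    define Q1a where "Q1a = mat k (n - t) (\<lambda>(i,j). Q1 $$ (i,j))"
    have P1ac: "P1a \<in> carrier_mat k (n - t)" and Q1ac: "Q1a \<in> carrier_mat k (n - t)"
      by (simp_all add: P1a_def Q1a_def)
    obtain Pr Qr rP m q' r' s' where er: "eqv2 k (n - t) P1a Q1a Pr Qr" and nf: "NF k (n - t) Pr Qr rP m q' r' s'"
      using less.IH[OF kl' P1ac Q1ac] by blast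
    obtain U2 V2 where U2: "inv_ex U2 k" and V2: "inv_ex V2 (n - t)" and Pr: "Pr = U2 * P1a * V2"
      and Qr: "Qr = U2 * Q1a * V2" using er by (auto simp: eqv2_def)
    have U2c: "U2 \<in> carrier_mat k k" and V2c: "V2 \<in> carrier_mat (n - t) (n - t)" using U2 V2 inv_ex_carrier by auto
    define U3 where "U3 = four_block_mat U2 (0\<^sub>m k (l - k)) (0\<^sub>m (l - k) k) (1\<^sub>m (l - k))"
    define V3 where "V3 = four_block_mat V2 (0\<^sub>m (n - t) t) (0\<^sub>m t (n - t)) (1\<^sub>m t)"
    have U3: "inv_ex U3 l" using inv_ex_block[OF U2 inv_ex_one[of "l - k"]] kl by (simp add: U3_def)
    have V3: "inv_ex V3 n" using inv_ex_block[OF V2 inv_ex_one[of t]] tl by (simp add: V3_def)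
    have U3c: "U3 \<in> carrier_mat l l" and V3c: "V3 \<in> carrier_mat n n" using U3 V3 inv_ex_carrier by auto
    have G1: "(U3 * Z * V3) $$ (i,j) = (\<Sum>h\<in>{0..<n-t}. (U3 * Z) $$ (i,h) * V2 $$ (h,j))"
      if "Z \<in> carrier_mat l n" "i < l" "j < n - t" for Z i j
    proof -
      have "U3 * Z \<in> carrier_mat l ((n - t) + t)" using U3c that tl by auto
      thus ?thesis using blk_right[of V2 "n - t" "1\<^sub>m t" t "U3 * Z" l i j] that V2c tl by (simp add: V3_def)
    qed
    have G2: "(U3 * Z * V3) $$ (i,j) = (U3 * Z) $$ (i,j)"
      if "Z \<in> carrier_mat l n" "i < l" "n - t \<le> j" "j < n" for Z i j
    proof -
      have "U3 * Z \<in> carrier_mat l ((n - t) + t)" using U3c that tl by auto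
      hence "(U3 * Z * V3) $$ (i,j) = (\<Sum>h\<in>{0..<t}. (U3 * Z) $$ (i, h + (n - t)) * (1\<^sub>m t) $$ (h, j - (n - t)))"
        using blk_right[of V2 "n - t" "1\<^sub>m t" t "U3 * Z" l i j] that V2c tl by (simp add: V3_def)
      also have "\<dots> = (U3 * Z) $$ (i, j - (n - t) + (n - t))"
        by (rule sum_one_mat) (use that tl in auto)
      finally show ?thesis using that by simp
    qed
    have G3: "(U3 * Z) $$ (i,h) = (\<Sum>g\<in>{0..<k}. U2 $$ (i,g) * Z $$ (g,h))"
      if "Z \<in> carrier_mat l n" "i < k" "h < n" for Z i h
    proof -
      have "Z \<in> carrier_mat (k + (l - k)) n" using that kl by auto
      thus ?thesis using blk_left[of U2 k "1\<^sub>m (l - k)" "l - k" Z n i h] that U2c kl by (simp add: U3_def)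
    qed
    have G4: "(U3 * Z) $$ (i,h) = Z $$ (i,h)"
      if "Z \<in> carrier_mat l n" "k \<le> i" "i < l" "h < n" for Z i h
    proof -
      have "Z \<in> carrier_mat (k + (l - k)) n" using that kl by auto
      hence "(U3 * Z) $$ (i,h) = (\<Sum>g\<in>{0..<l - k}. (1\<^sub>m (l - k)) $$ (i - k, g) * Z $$ (g + k, h))"
        using blk_left[of U2 k "1\<^sub>m (l - k)" "l - k" Z n i h] that U2c kl by (simp add: U3_def)
      also have "\<dots> = Z $$ (i - k + k, h)" by (rule sum_one_mat_left) (use that in auto)
      finally show ?thesis using that by simp
    qed
    have Ga: "(U3 * Z * V3) $$ (i,j) = (U2 * mat k (n - t) (\<lambda>(i,j). Z $$ (i,j)) * V2) $$ (i,j)"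
      if "Z \<in> carrier_mat l n" "i < k" "j < n - t" for Z i j
    proof -
      let ?Za = "mat k (n - t) (\<lambda>(i,j). Z $$ (i,j))"
      have c1: "U2 * ?Za \<in> carrier_mat k (n - t)" using U2c by auto
      have "(U2 * ?Za * V2) $$ (i,j) = (\<Sum>h\<in>{0..<n-t}. (U2 * ?Za) $$ (i,h) * V2 $$ (h,j))"
        by (rule mult_entry2[OF c1 V2c]) (use that in auto)
      also have "\<dots> = (\<Sum>h\<in>{0..<n-t}. (U3 * Z) $$ (i,h) * V2 $$ (h,j))"
      proof (rule sum.cong)
        fix h assume h: "h \<in> {0..<n-t}"
        have "(U2 * ?Za) $$ (i,h) = (\<Sum>g\<in>{0..<k}. U2 $$ (i,g) * ?Za $$ (g,h))"
          by (rule mult_entry2[OF U2c]) (use that h in auto)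
        also have "\<dots> = (\<Sum>g\<in>{0..<k}. U2 $$ (i,g) * Z $$ (g,h))"
          by (rule sum.cong) (use h in auto)
        also have "\<dots> = (U3 * Z) $$ (i,h)" by (rule G3[symmetric]) (use that h kl in auto)
        finally show "(U2 * ?Za) $$ (i,h) * V2 $$ (h,j) = (U3 * Z) $$ (i,h) * V2 $$ (h,j)" by simp
      qed simp
      also have "\<dots> = (U3 * Z * V3) $$ (i,j)" by (rule G1[symmetric]) (use that kl in auto)
      finally show ?thesis by simp
    qed
    define X where "X = U3 * P1 * V3"
    define Yq where "Yq = U3 * Q1 * V3"
    have e2: "eqv2 l n P1 Q1 X Yq" unfolding eqv2_def X_def Yq_def using U3 V3 by blast
    have Xc: "X \<in> carrier_mat l n" and Yqc: "Yq \<in> carrier_mat l n" using U3c V3c P1c Q1c by (auto simp: X_def Yq_def)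
    have ha: "X $$ (i,j) = Pr $$ (i,j) \<and> Yq $$ (i,j) = Qr $$ (i,j)" if "i < k" "j < n - t" for i j
      using Ga[OF P1c that] Ga[OF Q1c that] by (simp add: X_def Yq_def Pr Qr P1a_def Q1a_def)
    have hb: "X $$ (i,j) = 0" if "k \<le> i" "i < l" "j < n" for i j
    proof (cases "j < n - t")
      case True
      have "X $$ (i,j) = (\<Sum>h\<in>{0..<n-t}. (U3 * P1) $$ (i,h) * V2 $$ (h,j))" using G1[OF P1c _ True] that by (simp add: X_def)
      also have "\<dots> = 0" by (rule sum.neutral) (use G4[OF P1c] P1low that in auto)
      finally show ?thesis .
    next
      case False
      thus ?thesis using G2[OF P1c] G4[OF P1c] P1low that by (simp add: X_def)
    qed
    have hc: "Yq $$ (i,j) = 0" if "k \<le> i" "i < l" "j < n - t" for i j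
    proof -
      have "Yq $$ (i,j) = (\<Sum>h\<in>{0..<n-t}. (U3 * Q1) $$ (i,h) * V2 $$ (h,j))" using G1[OF Q1c _ that(3)] that by (simp add: Yq_def)
      also have "\<dots> = 0" by (rule sum.neutral) (use G4[OF Q1c] Q1c0 that in auto)
      finally show ?thesis .
    qed
    have hd: "Yq $$ (i,j) = E $$ (i - k, j - (n - t))" if "k \<le> i" "i < l" "n - t \<le> j" "j < n" for i j
      using G2[OF Q1c] G4[OF Q1c] Q1d that by (simp add: Yq_def)
    define A0 where "A0 = rP + (\<Sum>i<q'. r' i)"
    have A0k: "A0 \<le> k" using nf unfolding NF_def A0_def by linarith
    have ktl: "k + t \<le> l" using tl kl by simp
    define \<sigma> where "\<sigma> = (\<lambda>p. if p < rP + (\<Sum>i<q'. r' i) then p else if p < rP + (\<Sum>i<q'. r' i) + t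
                    then k + (p - (rP + (\<Sum>i<q'. r' i))) else if p < k + t then p - t else p)"
    define \<tau> where "\<tau> = (\<lambda>i. if i < A0 then i else if i < k then i + t else if i < k + t then A0 + (i - k) else i)"
    have sig: "inv_ex (pm l \<sigma>) l"
      by (rule pm_inv[where \<tau> = \<tau>]) (use A0k ktl in \<open>auto simp: \<sigma>_def \<tau>_def A0_def[symmetric]\<close>)
    define Pf where "Pf = pm l \<sigma> * X"
    define Qf where "Qf = pm l \<sigma> * Yq"
    have e3: "eqv2 l n X Yq Pf Qf" unfolding eqv2_def Pf_def Qf_def using sig inv_ex_one[of n] Xc Yqc
      by (intro exI[of _ "pm l \<sigma>"] exI[of _ "1\<^sub>m n"]) auto
    have sigl: "\<sigma> p < l" if "p < l" for p using that A0k ktl by (auto simp: \<sigma>_def A0_def[symmetric])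
    have Xf: "Pf $$ (p,j) = X $$ (\<sigma> p, j)" if "p < l" "j < n" for p j
      unfolding Pf_def by (rule pm_mult[where \<sigma>=\<sigma>, OF Xc that sigl[OF that(1)]])
    have Yf: "Qf $$ (p,j) = Yq $$ (\<sigma> p, j)" if "p < l" "j < n" for p j
      unfolding Qf_def by (rule pm_mult[where \<sigma>=\<sigma>, OF Yqc that sigl[OF that(1)]])
    have "NF l n Pf Qf rP m (Suc q') (r'(q' := t)) (s'(q' := l - k - t))"
      by (rule step_nf[OF nf kl' tl(1) tl(2) ha hb hc hd _ _ \<sigma>_def Xf Yf]) (use Ez Em in auto)
    moreover have "eqv2 l n P Q Pf Qf"
    proof -
      have Bc': "B0 \<in> carrier_mat l n" by (rule B0c)
      have "eqv2 l n B0 Q0 X Yq" by (rule eqv2_trans[OF B0c Q0c e1 e2])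
      hence "eqv2 l n B0 Q0 Pf Qf" by (rule eqv2_trans[OF B0c Q0c _ e3])
      thus ?thesis by (rule eqv2_trans[OF P Q e0])
    qed
    ultimately show ?thesis by blast
  qed
qed



theorem theorem1:
  fixes P Q :: "real poly mat" and l n :: nat
  assumes "P \<in> carrier_mat l n" and "Q \<in> carrier_mat l n"
  shows "\<exists>U V rP m q (r :: nat \<Rightarrow> nat) (s :: nat \<Rightarrow> nat).
    U \<in> carrier_mat l l \<and> unimodular U \<and> V \<in> carrier_mat n n \<and> unimodular V \<and>
    rP + m + (\<Sum>a<q. r a) = n \<and> rP + (\<Sum>a<q. r a) + (\<Sum>a<q. s a) = l \<and>
    diag_monic_block (U * P * V) 0 0 rP \<and>
    block_zero (U * P * V) (rowP rP) (col0 rP m) \<and>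
    (\<forall>a<q. block_zero (U * P * V) (rowR rP r a \<union> rowS rP r q s a)
              (colP rP \<union> col0 rP m \<union> (\<Union>b\<in>{..a}. colC rP m r b))) \<and>
    (\<forall>a<q. block_zero (U * Q * V) (rowR rP r a)
              (colP rP \<union> col0 rP m \<union> (\<Union>b\<in>{..<a}. colC rP m r b))) \<and>
    (\<forall>a<q. diag_monic_block (U * Q * V) (rP + (\<Sum>i<a. r i)) (rP + m + (\<Sum>i<a. r i)) (r a)) \<and>
    (\<forall>a<q. block_zero (U * Q * V) (rowS rP r q s a)
              (colP rP \<union> col0 rP m \<union> (\<Union>b\<in>{..a}. colC rP m r b)))"
proof -
  obtain P' Q' rP m q r s where e: "eqv2 l n P Q P' Q'" and nf: "NF l n P' Q' rP m q r s"
    using main[OF assms] by blast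
  obtain U V where U: "inv_ex U l" and V: "inv_ex V n" and PU: "P' = U * P * V" and QU: "Q' = U * Q * V"
    using e by (auto simp: eqv2_def)
  show ?thesis
    apply (rule exI[of _ U], rule exI[of _ V], rule exI[of _ rP], rule exI[of _ m], rule exI[of _ q],
        rule exI[of _ r], rule exI[of _ s])
    using nf inv_ex_carrier[OF U] inv_ex_carrier[OF V] inv_ex_unimodular[OF U] inv_ex_unimodular[OF V]
    unfolding NF_def PU QU by blast
qed


end
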